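(* Let $H$ be a separable complex Hilbert space and $X$ a locally compact space with a positive Borel measure $\mu$. The maps $$\zeta:\operatorname{GL}(H)\times\overline{F}_0\to F,\ \zeta(A,f)=Af,\qquad \zeta^+:\operatorname{GL}^+(H)\times F_0\to F,\ \zeta^+(A,f)=Af$$ are continuous bijections, where $\operatorname{GL}(H)$ and $\operatorname{GL}^+(H)$ carry the operator norm topology and $F$, $F_0$, $\overline{F}_0$ carry the topology of the norm $\|f\|_J=\sup_{x\in X}\|f(x)\|_H$.
   Context: Inner products are linear in the first argument. A frame on $H$ is a map $f:X\to H$ such that $x\mapsto\langle\phi,f(x)\rangle$ is measurable for every $\phi\in H$ and there exist $0<A\le B$ with $A\|\phi\|^2\le\int_X|\langle\phi,f(x)\rangle|^2d\mu(x)\le B\|\phi\|^2$ for all $\phi\in H$; it is Parseval if $A=B=1$. $\operatorname{GL}(H)$ is the group of bounded invertible operators on $H$ with bounded inverse, $\operatorname{GL}^+(H)$ the set of positive elements of $\operatorname{GL}(H)$, $U(H)$ the unitary group. $J$ is the Banach space of maps $f:X\to H$ with $\|f\|_J<\infty$; $F$ is the set of frames in $J$ and $F_0$ the set of Parseval frames in $J$. For $A\in\operatorname{GL}(H)$ and $f:X\to H$, $(Af)(x)=A[f(x)]$. $\overline{F}_0\subset F_0$ is a fixed transversal of the orbit space $F_0/U(H)$, i.e. it contains exactly one element of each orbit $\{Vf:V\in U(H)\}$, $f\in F_0$ (a maximal set of unitarily inequivalent Parseval frames). *)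

theory Defs
  imports "HOL-Analysis.Analysis"
begin

text \<open>HOL-Analysis has no complex inner product spaces, so we introduce a type class:
  a real Banach space carrying a complex scalar multiplication (extending the real one)
  and a complex inner product, linear in the first argument, whose norm is the Banach norm.\<close>

class chilbert_space = banach +
  fixes scaleC :: "complex \<Rightarrow> 'a \<Rightarrow> 'a"
    and cinner :: "'a \<Rightarrow> 'a \<Rightarrow> complex"
  assumes scaleC_add_right: "scaleC c (x + y) = scaleC c x + scaleC c y"
    and scaleC_add_left: "scaleC (c + d) x = scaleC c x + scaleC d x"
    and scaleC_scaleC: "scaleC c (scaleC d x) = scaleC (c * d) x"
    and scaleC_one: "scaleC 1 x = x"
    and scaleR_scaleC: "scaleR r x = scaleC (complex_of_real r) x"
    and cinner_add_left: "cinner (x + y) z = cinner x z + cinner y z"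
    and cinner_scaleC_left: "cinner (scaleC c x) y = c * cinner x y"
    and cinner_commute: "cinner y x = cnj (cinner x y)"
    and norm_eq_sqrt_cinner: "norm x = sqrt (Re (cinner x x))"

definition separable_space :: "'a::topological_space itself \<Rightarrow> bool" where
  "separable_space _ \<longleftrightarrow> (\<exists>D::'a set. countable D \<and> closure D = UNIV)"

definition clinear_op :: "('h::chilbert_space \<Rightarrow> 'h) \<Rightarrow> bool" where
  "clinear_op A \<longleftrightarrow> (\<forall>x y. A (x + y) = A x + A y) \<and> (\<forall>c x. A (scaleC c x) = scaleC c (A x))"

definition bounded_op :: "('h::chilbert_space \<Rightarrow> 'h) \<Rightarrow> bool" where
  "bounded_op A \<longleftrightarrow> clinear_op A \<and> (\<exists>K. \<forall>x. norm (A x) \<le> K * norm x)"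

definition GL :: "('h::chilbert_space \<Rightarrow> 'h) set" where
  "GL = {A. bounded_op A \<and> (\<exists>B. bounded_op B \<and> A \<circ> B = id \<and> B \<circ> A = id)}"

definition positive_op :: "('h::chilbert_space \<Rightarrow> 'h) \<Rightarrow> bool" where
  "positive_op A \<longleftrightarrow> bounded_op A \<and> (\<forall>x y. cinner (A x) y = cinner x (A y))
      \<and> (\<forall>x. 0 \<le> Re (cinner (A x) x))"

definition GL_plus :: "('h::chilbert_space \<Rightarrow> 'h) set" where
  "GL_plus = {A \<in> GL. positive_op A}"

definition unitary_group :: "('h::chilbert_space \<Rightarrow> 'h) set" where
  "unitary_group = {U. bounded_op U \<and> bij U \<and> (\<forall>x y. cinner (U x) (U y) = cinner x y)}"

definition op_dist :: "('h::chilbert_space \<Rightarrow> 'h) \<Rightarrow> ('h \<Rightarrow> 'h) \<Rightarrow> real" where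
  "op_dist A B = onorm (\<lambda>x. A x - B x)"

definition is_frame :: "'x measure \<Rightarrow> ('x \<Rightarrow> 'h::chilbert_space) \<Rightarrow> bool" where
  "is_frame M f \<longleftrightarrow>
     (\<forall>\<phi>. (\<lambda>x. cinner \<phi> (f x)) \<in> borel_measurable M) \<and>
     (\<exists>a b. 0 < a \<and> a \<le> b \<and>
        (\<forall>\<phi>. ennreal (a * (norm \<phi>)\<^sup>2) \<le> (\<integral>\<^sup>+ x. ennreal ((cmod (cinner \<phi> (f x)))\<^sup>2) \<partial>M)
            \<and> (\<integral>\<^sup>+ x. ennreal ((cmod (cinner \<phi> (f x)))\<^sup>2) \<partial>M) \<le> ennreal (b * (norm \<phi>)\<^sup>2)))"

definition is_parseval_frame :: "'x measure \<Rightarrow> ('x \<Rightarrow> 'h::chilbert_space) \<Rightarrow> bool" where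
  "is_parseval_frame M f \<longleftrightarrow>
     (\<forall>\<phi>. (\<lambda>x. cinner \<phi> (f x)) \<in> borel_measurable M) \<and>
     (\<forall>\<phi>. (\<integral>\<^sup>+ x. ennreal ((cmod (cinner \<phi> (f x)))\<^sup>2) \<partial>M) = ennreal ((norm \<phi>)\<^sup>2))"

definition J_space :: "('x \<Rightarrow> 'h::chilbert_space) set" where
  "J_space = {f. bounded (range f)}"

definition J_norm :: "('x \<Rightarrow> 'h::chilbert_space) \<Rightarrow> real" where
  "J_norm f = (SUP x. norm (f x))"

definition J_dist :: "('x \<Rightarrow> 'h::chilbert_space) \<Rightarrow> ('x \<Rightarrow> 'h) \<Rightarrow> real" where
  "J_dist f g = J_norm (\<lambda>x. f x - g x)"

definition frames :: "'x measure \<Rightarrow> ('x \<Rightarrow> 'h::chilbert_space) set" where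
  "frames M = {f \<in> J_space. is_frame M f}"

definition parseval_frames :: "'x measure \<Rightarrow> ('x \<Rightarrow> 'h::chilbert_space) set" where
  "parseval_frames M = {f \<in> J_space. is_parseval_frame M f}"

text \<open>T is a transversal of the orbit space F0/U(H).\<close>
definition unitary_transversal :: "'x measure \<Rightarrow> ('x \<Rightarrow> 'h::chilbert_space) set \<Rightarrow> bool" where
  "unitary_transversal M T \<longleftrightarrow> T \<subseteq> parseval_frames M \<and>
     (\<forall>f \<in> parseval_frames M. \<exists>!g. g \<in> T \<and> (\<exists>V \<in> unitary_group. g = V \<circ> f))"

definition continuous_OJ :: "(('h::chilbert_space \<Rightarrow> 'h) \<times> ('x \<Rightarrow> 'h)) set
     \<Rightarrow> (('h \<Rightarrow> 'h) \<times> ('x \<Rightarrow> 'h) \<Rightarrow> ('x \<Rightarrow> 'h)) \<Rightarrow> bool" where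
  "continuous_OJ D z \<longleftrightarrow> (\<forall>(A, f) \<in> D. \<forall>e>0. \<exists>d>0. \<forall>(B, g) \<in> D.
      op_dist B A < d \<and> J_dist g f < d \<longrightarrow> J_dist (z (B, g)) (z (A, f)) < e)"

end

theory Submission
  imports Defs "HOL-Computational_Algebra.Formal_Power_Series"
begin



section \<open>Basic Hilbert space algebra\<close>

lemma cinner_add_right: "cinner x (y + z) = cinner x y + cinner (x::'a::chilbert_space) z"
  using cinner_commute[of x "y+z"] cinner_commute[of x y] cinner_commute[of x z] by (simp add: cinner_add_left)

lemma cinner_scaleC_right: "cinner x (scaleC c y) = cnj c * cinner (x::'a::chilbert_space) y"
  using cinner_commute[of x "scaleC c y"] cinner_commute[of x y] by (simp add: cinner_scaleC_left)

lemma scaleC_zero_left[simp]: "scaleC 0 (x::'a::chilbert_space) = 0"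
  using scaleR_scaleC[of 0 x] by simp

lemma scaleC_zero_right[simp]: "scaleC c (0::'a::chilbert_space) = 0"
proof -
  have "scaleC c (0::'a) = scaleC c (0 + 0)" by simp
  also have "\<dots> = scaleC c 0 + scaleC c 0" by (rule scaleC_add_right)
  finally show ?thesis by simp
qed

lemma scaleC_minus1: "scaleC (-1) (x::'a::chilbert_space) = - x"
  using scaleR_scaleC[of "-1" x] by simp

lemma scaleC_minus_right: "scaleC c (- x) = - scaleC c (x::'a::chilbert_space)"
proof -
  have "scaleC c x + scaleC c (-x) = scaleC c (x + -x)" by (rule scaleC_add_right[symmetric])
  also have "\<dots> = 0" by simp
  finally have "scaleC c x + scaleC c (-x) = 0" .
  from minus_unique[OF this] show ?thesis by simp
qed

lemma scaleC_minus_left: "scaleC (- c) x = - scaleC c (x::'a::chilbert_space)"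
proof -
  have "scaleC c x + scaleC (-c) x = scaleC (c + -c) x" by (rule scaleC_add_left[symmetric])
  also have "\<dots> = 0" by simp
  finally have "scaleC c x + scaleC (-c) x = 0" .
  from minus_unique[OF this] show ?thesis by simp
qed

lemma scaleC_diff_right: "scaleC c (x - y) = scaleC c x - scaleC c (y::'a::chilbert_space)"
  by (simp only: diff_conv_add_uminus scaleC_add_right scaleC_minus_right)

lemma scaleC_diff_left: "scaleC (c - d) x = scaleC c x - scaleC d (x::'a::chilbert_space)"
  by (simp only: diff_conv_add_uminus scaleC_add_left scaleC_minus_left)

lemma scaleC_of_real: "scaleC (complex_of_real r) (x::'a::chilbert_space) = r *\<^sub>R x"
  by (simp add: scaleR_scaleC)

lemma cinner_zero_left[simp]: "cinner 0 (x::'a::chilbert_space) = 0"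
proof -
  have "cinner (0::'a) x = cinner (0 + 0) x" by simp
  also have "\<dots> = cinner 0 x + cinner 0 x" by (rule cinner_add_left)
  finally show ?thesis by simp
qed

lemma cinner_zero_right[simp]: "cinner x (0::'a::chilbert_space) = 0"
  using cinner_commute[of x 0] by simp

lemma cinner_minus_left: "cinner (- x) y = - cinner (x::'a::chilbert_space) y"
proof -
  have "cinner x y + cinner (-x) y = cinner (x + -x) y" by (rule cinner_add_left[symmetric])
  also have "\<dots> = 0" by simp
  finally have "cinner x y + cinner (-x) y = 0" .
  from minus_unique[OF this] show ?thesis by simp
qed

lemma cinner_minus_right: "cinner x (- y) = - cinner (x::'a::chilbert_space) y"
proof -
  have "cinner x y + cinner x (-y) = cinner x (y + -y)" by (rule cinner_add_right[symmetric])
  also have "\<dots> = 0" by simp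
  finally have "cinner x y + cinner x (-y) = 0" .
  from minus_unique[OF this] show ?thesis by simp
qed

lemma cinner_diff_left: "cinner (x - y) z = cinner x z - cinner (y::'a::chilbert_space) z"
  by (simp only: diff_conv_add_uminus cinner_add_left cinner_minus_left)

lemma cinner_diff_right: "cinner x (y - z) = cinner x y - cinner (x::'a::chilbert_space) z"
  by (simp only: diff_conv_add_uminus cinner_add_right cinner_minus_right)

lemma cinner_scaleR_left: "cinner (r *\<^sub>R x) y = complex_of_real r * cinner (x::'a::chilbert_space) y"
  by (simp add: scaleR_scaleC cinner_scaleC_left)

lemma cinner_scaleR_right: "cinner x (r *\<^sub>R y) = complex_of_real r * cinner (x::'a::chilbert_space) y"
  by (simp add: scaleR_scaleC cinner_scaleC_right)

lemma cinner_sum_left: "cinner (sum f A) (y::'a::chilbert_space) = (\<Sum>a\<in>A. cinner (f a) y)"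
  by (induction A rule: infinite_finite_induct) (auto simp: cinner_add_left)

lemma cinner_sum_right: "cinner y (sum f A) = (\<Sum>a\<in>A. cinner (y::'a::chilbert_space) (f a))"
  by (induction A rule: infinite_finite_induct) (auto simp: cinner_add_right)

lemma cinner_self_real: "cinner x x = complex_of_real ((norm (x::'a::chilbert_space))\<^sup>2)"
proof -
  have n: "norm x = sqrt (Re (cinner x x))" by (rule norm_eq_sqrt_cinner)
  have "Re (cinner x x) \<ge> 0"
  proof (rule ccontr)
    assume "\<not> ?thesis"
    then have "sqrt (Re (cinner x x)) < 0" by simp
    with n show False by (metis norm_ge_zero not_less)
  qed
  then have re: "Re (cinner x x) = (norm x)\<^sup>2" using n by simp
  have "cinner x x = cnj (cinner x x)" by (rule cinner_commute)
  then have "Im (cinner x x) = 0" by (metis Reals_cnj_iff complex_is_Real_iff)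
  with re show ?thesis by (simp add: complex_eq_iff)
qed

lemma cinner_self_eq_zero[simp]: "cinner x x = 0 \<longleftrightarrow> (x::'a::chilbert_space) = 0"
  by (simp add: cinner_self_real)

lemma norm_scaleC: "norm (scaleC c (x::'a::chilbert_space)) = cmod c * norm x"
proof -
  have "cinner (scaleC c x) (scaleC c x) = (c * cnj c) * cinner x x"
    by (simp add: cinner_scaleC_left cinner_scaleC_right)
  also have "c * cnj c = complex_of_real ((cmod c)\<^sup>2)" by (rule complex_norm_square[symmetric])
  finally have "complex_of_real ((norm (scaleC c x))\<^sup>2) = complex_of_real ((cmod c)\<^sup>2 * (norm x)\<^sup>2)"
    unfolding cinner_self_real of_real_mult by simp
  then have "(norm (scaleC c x))\<^sup>2 = ((cmod c) * norm x)\<^sup>2"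
    by (metis of_real_eq_iff power_mult_distrib)
  then show ?thesis by (simp add: power2_eq_iff_nonneg)
qed

lemma norm_sq_add: "(norm (x + y))\<^sup>2 = (norm x)\<^sup>2 + (norm y)\<^sup>2 + 2 * Re (cinner x (y::'a::chilbert_space))"
proof -
  have "cinner (x + y) (x + y) = cinner x x + cinner y y + (cinner x y + cinner y x)"
    by (simp add: cinner_add_left cinner_add_right)
  also have "cinner x y + cinner y x = complex_of_real (2 * Re (cinner x y))"
    by (subst cinner_commute[of y x]) (simp add: complex_add_cnj)
  finally have "complex_of_real ((norm (x + y))\<^sup>2) = complex_of_real ((norm x)\<^sup>2 + (norm y)\<^sup>2 + 2 * Re (cinner x y))"
    unfolding cinner_self_real of_real_add by simp
  then show ?thesis by (metis of_real_eq_iff)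
qed

lemma Cauchy_Schwarz_c: "cmod (cinner x y) \<le> norm x * norm (y::'a::chilbert_space)"
proof (cases "y = 0")
  case True then show ?thesis by simp
next
  case False
  then have ny: "norm y > 0" by simp
  define a where "a = cinner x y"
  define n2 where "n2 = (norm y)\<^sup>2"
  have n2: "n2 > 0" using ny by (simp add: n2_def)
  define t where "t = a / complex_of_real n2"
  have yx: "cinner y x = cnj a" by (simp add: a_def cinner_commute[of y x])
  have yy: "cinner y y = complex_of_real n2" by (simp add: n2_def cinner_self_real)
  have aa: "a * cnj a = complex_of_real ((cmod a)\<^sup>2)" by (rule complex_norm_square[symmetric])
  have e: "cinner (x - scaleC t y) (x - scaleC t y) = cinner x x - cnj t * a - t * cnj a + t * cnj t * complex_of_real n2"
    by (simp add: cinner_diff_left cinner_diff_right cinner_scaleC_left cinner_scaleC_right algebra_simps a_def yx[unfolded a_def] yy)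
  have 1: "cnj t * a = complex_of_real ((cmod a)\<^sup>2 / n2)"
    unfolding t_def using aa n2 by (simp add: mult.commute)
  have 2: "t * cnj a = complex_of_real ((cmod a)\<^sup>2 / n2)"
    unfolding t_def using aa n2 by simp
  have 3: "t * cnj t * complex_of_real n2 = complex_of_real ((cmod a)\<^sup>2 / n2)"
    unfolding t_def using aa n2 by (simp add: power2_eq_square)
  have "cinner (x - scaleC t y) (x - scaleC t y) = complex_of_real ((norm x)\<^sup>2 - (cmod a)\<^sup>2 / n2)"
    unfolding e 1 2 3 cinner_self_real[of x] by simp
  then have "complex_of_real ((norm (x - scaleC t y))\<^sup>2) = complex_of_real ((norm x)\<^sup>2 - (cmod a)\<^sup>2 / n2)"
    by (simp only: cinner_self_real)
  then have "0 \<le> (norm x)\<^sup>2 - (cmod a)\<^sup>2 / n2"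
    by (metis of_real_eq_iff zero_le_power2)
  then have "(cmod a)\<^sup>2 \<le> (norm x * norm y)\<^sup>2"
    using n2 by (simp add: field_simps power_mult_distrib n2_def)
  then show ?thesis using power2_le_imp_le a_def by fastforce
qed

lemma cinner_eq_zeroI: "(\<And>y. cinner x y = 0) \<Longrightarrow> (x::'a::chilbert_space) = 0"
  using cinner_self_eq_zero by blast

lemma cinner_ext: "(\<And>y. cinner x y = cinner z y) \<Longrightarrow> (x::'a::chilbert_space) = z"
  using cinner_eq_zeroI[of "x - z"] by (simp add: cinner_diff_left)

lemma cinner_ext_right: "(\<And>y. cinner y x = cinner y z) \<Longrightarrow> (x::'a::chilbert_space) = z"
  by (metis cinner_commute cinner_ext)




section \<open>Operators\<close>

lemma bounded_opD:
  assumes "bounded_op A"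
  shows "A (x + y) = A x + A y" "A (scaleC c x) = scaleC c (A x)"
  using assms unfolding bounded_op_def clinear_op_def by auto

lemma clinear_opD:
  assumes "clinear_op A"
  shows "A (x + y) = A x + A y" "A (scaleC c x) = scaleC c (A x)"
  using assms unfolding clinear_op_def by auto

lemma bounded_op_bound:
  assumes "bounded_op A"
  obtains K where "K > 0" "\<And>x. norm (A x) \<le> K * norm x"
proof -
  from assms obtain K where K: "\<forall>x. norm (A x) \<le> K * norm x" unfolding bounded_op_def by auto
  have "norm (A x) \<le> max K 1 * norm x" for x
  proof -
    have "norm (A x) \<le> K * norm x" using K by auto
    also have "\<dots> \<le> max K 1 * norm x" by (intro mult_right_mono) auto
    finally show ?thesis .
  qed
  then show ?thesis by (intro that[of "max K 1"]) auto
qed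

lemma bounded_op_0: "bounded_op A \<Longrightarrow> A 0 = 0"
proof -
  assume a: "bounded_op A"
  have "A 0 = A (0 + 0)" by simp
  also have "\<dots> = A 0 + A 0" using bounded_opD(1)[OF a] .
  finally show ?thesis by simp
qed

lemma bounded_op_minus: "bounded_op A \<Longrightarrow> A (- x) = - A x"
  using bounded_opD(2)[of A "-1" x] by (simp add: scaleC_minus1)

lemma bounded_op_diff: "bounded_op A \<Longrightarrow> A (x - y) = A x - A y"
  by (simp only: diff_conv_add_uminus bounded_opD(1) bounded_op_minus)

lemma bounded_op_scaleR: "bounded_op A \<Longrightarrow> A (r *\<^sub>R x) = r *\<^sub>R A x"
  by (simp add: scaleR_scaleC bounded_opD(2))

lemma bounded_op_linear: "bounded_op A \<Longrightarrow> bounded_linear A"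
proof -
  assume a: "bounded_op A"
  obtain K where K: "\<And>x. norm (A x) \<le> K * norm x" using bounded_op_bound[OF a] by auto
  show ?thesis
    by (rule bounded_linear_intro[where K=K]) (auto simp: bounded_opD[OF a] bounded_op_scaleR[OF a] K mult.commute)
qed

lemma bounded_op_sum: "bounded_op A \<Longrightarrow> A (sum f S) = (\<Sum>i\<in>S. A (f i))"
  by (induction S rule: infinite_finite_induct) (auto simp: bounded_op_0 bounded_opD)

lemma bounded_op_id: "bounded_op id"
  unfolding bounded_op_def clinear_op_def by (auto intro!: exI[of _ 1])

lemma bounded_op_id': "bounded_op (\<lambda>x. x)"
  unfolding bounded_op_def clinear_op_def by (auto intro!: exI[of _ 1])

lemma bounded_op_comp: "bounded_op A \<Longrightarrow> bounded_op B \<Longrightarrow> bounded_op (A \<circ> B)"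
proof -
  assume a: "bounded_op A" and b: "bounded_op B"
  obtain K where K: "K > 0" "\<And>x. norm (A x) \<le> K * norm x" using bounded_op_bound[OF a] by auto
  obtain L where L: "L > 0" "\<And>x. norm (B x) \<le> L * norm x" using bounded_op_bound[OF b] by auto
  have "norm (A (B x)) \<le> (K * L) * norm x" for x
  proof -
    have "norm (A (B x)) \<le> K * norm (B x)" by (rule K)
    also have "\<dots> \<le> K * (L * norm x)" using K L by (intro mult_left_mono) auto
    finally show ?thesis by (simp add: mult.assoc)
  qed
  then show ?thesis unfolding bounded_op_def clinear_op_def
    by (auto simp: bounded_opD[OF a] bounded_opD[OF b])
qed

lemma bounded_op_comp': "bounded_op A \<Longrightarrow> bounded_op B \<Longrightarrow> bounded_op (\<lambda>x. A (B x))"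
  using bounded_op_comp[of A B] by (simp add: comp_def)

lemma bounded_op_add: "bounded_op A \<Longrightarrow> bounded_op B \<Longrightarrow> bounded_op (\<lambda>x. A x + B x)"
proof -
  assume a: "bounded_op A" and b: "bounded_op B"
  obtain K where K: "K > 0" "\<And>x. norm (A x) \<le> K * norm x" using bounded_op_bound[OF a] by auto
  obtain L where L: "L > 0" "\<And>x. norm (B x) \<le> L * norm x" using bounded_op_bound[OF b] by auto
  have "norm (A x + B x) \<le> (K + L) * norm x" for x
  proof -
    have "norm (A x + B x) \<le> norm (A x) + norm (B x)" by (rule norm_triangle_ineq)
    also have "\<dots> \<le> K * norm x + L * norm x" using K L by (intro add_mono) auto
    finally show ?thesis by (simp add: distrib_right)
  qed
  then show ?thesis unfolding bounded_op_def clinear_op_def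
    by (auto simp: bounded_opD[OF a] bounded_opD[OF b] scaleC_add_right)
qed

lemma bounded_op_scaleC: "bounded_op A \<Longrightarrow> bounded_op (\<lambda>x. scaleC c (A x))"
proof -
  assume a: "bounded_op A"
  obtain K where K: "K > 0" "\<And>x. norm (A x) \<le> K * norm x" using bounded_op_bound[OF a] by auto
  have "norm (scaleC c (A x)) \<le> (cmod c * K) * norm x" for x
    using K(2)[of x] by (simp add: norm_scaleC mult.assoc mult_left_mono)
  then show ?thesis unfolding bounded_op_def clinear_op_def
    by (auto simp: bounded_opD[OF a] scaleC_add_right scaleC_scaleC mult.commute intro!: exI[of _ "cmod c * K"])
qed

lemma bounded_op_scaleR_op: "bounded_op A \<Longrightarrow> bounded_op (\<lambda>x. r *\<^sub>R (A x))"
  using bounded_op_scaleC[of A "complex_of_real r"] by (simp add: scaleR_scaleC)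

lemma bounded_op_minus_op: "bounded_op A \<Longrightarrow> bounded_op (\<lambda>x. - (A x))"
  using bounded_op_scaleC[of A "-1"] by (simp add: scaleC_minus1)

lemma bounded_op_diff_op: "bounded_op A \<Longrightarrow> bounded_op B \<Longrightarrow> bounded_op (\<lambda>x. A x - B x)"
  using bounded_op_add[of A "\<lambda>x. - B x"] bounded_op_minus_op[of B] by simp

section \<open>Polarization\<close>

lemma quad_zero:
  assumes "bounded_op T" and z: "\<And>x. cinner (T x) x = 0"
  shows "T x = 0"
proof (rule cinner_eq_zeroI)
  fix y
  have e1: "cinner (T x) y + cinner (T y) x = 0"
    using z[of "x + y"] z[of x] z[of y]
    by (simp add: bounded_opD[OF assms(1)] cinner_add_left cinner_add_right add.commute)
  have e2: "cnj \<i> * cinner (T x) y + \<i> * cinner (T y) x = 0"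
    using z[of "x + scaleC \<i> y"] z[of x] z[of y]
    by (simp add: bounded_opD[OF assms(1)] cinner_add_left cinner_add_right cinner_scaleC_left cinner_scaleC_right)
  from e1 e2 show "cinner (T x) y = 0"
    by (simp add: algebra_simps)
qed

lemma isometry_cinner:
  assumes "bounded_op L" and n: "\<And>x. norm (L x) = norm x"
  shows "cinner (L x) (L y) = cinner x y"
proof -
  have re: "Re (cinner (L x) (L y)) = Re (cinner x y)" for x y
    using norm_sq_add[of "L x" "L y"] norm_sq_add[of x y] n[of "x + y"] n[of x] n[of y]
    by (simp add: bounded_opD[OF assms(1)])
  have "Re (cinner (L x) (L (scaleC \<i> y))) = Re (cinner x (scaleC \<i> y))" by (rule re)
  then have im: "Im (cinner (L x) (L y)) = Im (cinner x y)"
    by (simp add: bounded_opD[OF assms(1)] cinner_scaleC_right)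
  show ?thesis using re[of x y] im by (simp add: complex_eq_iff)
qed




lemma proj_identity:
  fixes x y :: "'a::chilbert_space"
  assumes "y \<noteq> 0"
  shows "(norm (x - scaleC (cinner x y / complex_of_real ((norm y)\<^sup>2)) y))\<^sup>2
          = (norm x)\<^sup>2 - (cmod (cinner x y))\<^sup>2 / (norm y)\<^sup>2"
proof -
  have ny: "norm y > 0" using assms by simp
  define a where "a = cinner x y"
  define n2 where "n2 = (norm y)\<^sup>2"
  have n2: "n2 > 0" using ny by (simp add: n2_def)
  define t where "t = a / complex_of_real n2"
  have yx: "cinner y x = cnj a" by (simp add: a_def cinner_commute[of y x])
  have yy: "cinner y y = complex_of_real n2" by (simp add: n2_def cinner_self_real)
  have aa: "a * cnj a = complex_of_real ((cmod a)\<^sup>2)" by (rule complex_norm_square[symmetric])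
  have e: "cinner (x - scaleC t y) (x - scaleC t y) = cinner x x - cnj t * a - t * cnj a + t * cnj t * complex_of_real n2"
    by (simp add: cinner_diff_left cinner_diff_right cinner_scaleC_left cinner_scaleC_right algebra_simps a_def yx[unfolded a_def] yy)
  have 1: "cnj t * a = complex_of_real ((cmod a)\<^sup>2 / n2)"
    unfolding t_def using aa n2 by (simp add: mult.commute)
  have 2: "t * cnj a = complex_of_real ((cmod a)\<^sup>2 / n2)"
    unfolding t_def using aa n2 by simp
  have 3: "t * cnj t * complex_of_real n2 = complex_of_real ((cmod a)\<^sup>2 / n2)"
    unfolding t_def using aa n2 by (simp add: power2_eq_square)
  have "cinner (x - scaleC t y) (x - scaleC t y) = complex_of_real ((norm x)\<^sup>2 - (cmod a)\<^sup>2 / n2)"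
    unfolding e 1 2 3 cinner_self_real[of x] by simp
  then have "complex_of_real ((norm (x - scaleC t y))\<^sup>2) = complex_of_real ((norm x)\<^sup>2 - (cmod a)\<^sup>2 / n2)"
    by (simp only: cinner_self_real)
  then show ?thesis unfolding t_def a_def n2_def by (simp only: of_real_eq_iff)
qed

lemma norm_sq_diff: "(norm (x - y))\<^sup>2 = (norm x)\<^sup>2 + (norm y)\<^sup>2 - 2 * Re (cinner x (y::'a::chilbert_space))"
  using norm_sq_add[of x "- y"] by (simp add: cinner_minus_right)

lemma parallelogram: "(norm (a + b))\<^sup>2 + (norm (a - b))\<^sup>2 = 2 * (norm a)\<^sup>2 + 2 * (norm (b::'a::chilbert_space))\<^sup>2"
  using norm_sq_add[of a b] norm_sq_diff[of a b] by simp

lemma riesz: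
  fixes l :: "'a::chilbert_space \<Rightarrow> complex"
  assumes add: "\<And>x y. l (x + y) = l x + l y"
    and sc: "\<And>c x. l (scaleC c x) = c * l x"
    and bd: "\<And>x. cmod (l x) \<le> K * norm x"
  shows "\<exists>w. \<forall>x. l x = cinner x w"
proof (cases "\<forall>x. l x = 0")
  case True then show ?thesis by (intro exI[of _ 0]) simp
next
  case False
  then obtain z0 where z0: "l z0 \<noteq> 0" by auto
  define z where "z = scaleC (inverse (l z0)) z0"
  have lz: "l z = 1" using z0 by (simp add: z_def sc)
  have l0: "l 0 = 0" using sc[of 0 0] by simp
  have lminus: "l (x - y) = l x - l y" for x y
    using add[of "x - y" y] by simp
  have lscR: "l (r *\<^sub>R x) = r *\<^sub>R l x" for r x
    using sc[of "complex_of_real r" x] by (simp add: scaleR_scaleC scaleR_conv_of_real)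
  have bl: "bounded_linear l"
    by (rule bounded_linear_intro[where K=K]) (auto simp: add lscR bd mult.commute)
  let ?S = "(\<lambda>v. (norm (z - v))\<^sup>2) ` {v. l v = 0}"
  define D where "D = Inf ?S"
  have ne: "?S \<noteq> {}" using l0 by auto
  have bdd: "bdd_below ?S" by (rule bdd_belowI[of _ 0]) auto
  have Dle: "D \<le> (norm (z - v))\<^sup>2" if "l v = 0" for v
    unfolding D_def using that bdd by (intro cInf_lower) auto
  have "\<exists>v. l v = 0 \<and> (norm (z - v))\<^sup>2 < D + 1 / real (Suc n)" for n
  proof -
    have "Inf ?S < D + 1 / real (Suc n)" unfolding D_def by simp
    from cInf_lessD[OF ne this] show ?thesis by auto
  qed
  then obtain v where v: "\<And>n. l (v n) = 0" "\<And>n. (norm (z - v n))\<^sup>2 < D + 1 / real (Suc n)"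
    by metis
  have para: "(norm (v n - v m))\<^sup>2 \<le> 2 / real (Suc n) + 2 / real (Suc m)" for n m
  proof -
    let ?a = "z - v n" and ?b = "z - v m"
    have pl: "(norm (?a + ?b))\<^sup>2 + (norm (?a - ?b))\<^sup>2 = 2 * (norm ?a)\<^sup>2 + 2 * (norm ?b)\<^sup>2"
      by (rule parallelogram)
    have ab: "?a + ?b = 2 *\<^sub>R (z - (1/2) *\<^sub>R (v n + v m))" by (simp add: algebra_simps scaleR_2)
    have lmid: "l ((1/2) *\<^sub>R (v n + v m)) = 0" using v(1)[of n] v(1)[of m] by (simp add: lscR add)
    have "(norm (?a + ?b))\<^sup>2 = 4 * (norm (z - (1/2) *\<^sub>R (v n + v m)))\<^sup>2"
      unfolding ab by (simp add: power_mult_distrib)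
    also have "\<dots> \<ge> 4 * D" using Dle[OF lmid] by simp
    finally have 1: "(norm (?a + ?b))\<^sup>2 \<ge> 4 * D" .
    have 2: "?a - ?b = v m - v n" by simp
    have "(norm (v n - v m))\<^sup>2 = (norm (?a - ?b))\<^sup>2" by (simp add: norm_minus_commute)
    also have "\<dots> = 2 * (norm ?a)\<^sup>2 + 2 * (norm ?b)\<^sup>2 - (norm (?a + ?b))\<^sup>2" using pl by simp
    also have "\<dots> \<le> 2 * (D + 1 / real (Suc n)) + 2 * (D + 1 / real (Suc m)) - 4 * D"
      using v(2)[of n] v(2)[of m] 1 by simp
    finally show ?thesis by simp
  qed
  have "Cauchy v"
  proof (rule metric_CauchyI)
    fix e :: real assume e: "e > 0"
    obtain N :: nat where N: "4 / e\<^sup>2 < real N" using reals_Archimedean2 by blast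
    have NN: "4 / real (Suc N) < e\<^sup>2"
    proof -
      have "4 < real N * e\<^sup>2" using N e by (simp add: field_simps)
      also have "\<dots> < real (Suc N) * e\<^sup>2" using e by simp
      finally show ?thesis by (simp add: field_simps)
    qed
    show "\<exists>M. \<forall>m\<ge>M. \<forall>n\<ge>M. dist (v m) (v n) < e"
    proof (intro exI allI impI)
      fix m n assume mn: "N \<le> m" "N \<le> n"
      have "2 / real (Suc m) \<le> 2 / real (Suc N)" "2 / real (Suc n) \<le> 2 / real (Suc N)"
        using mn by (auto intro!: divide_left_mono)
      then have "(norm (v m - v n))\<^sup>2 < e\<^sup>2" using para[of m n] NN by simp
      then have "norm (v m - v n) < e" using e by (simp add: power_less_imp_less_base)
      then show "dist (v m) (v n) < e" by (simp add: dist_norm)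
    qed
  qed
  then obtain v0 where lim: "v \<longlonglongrightarrow> v0" using Cauchy_convergent_iff convergent_def by blast
  have lv0: "l v0 = 0"
  proof -
    have "(\<lambda>n. l (v n)) \<longlonglongrightarrow> l v0" by (rule bounded_linear.tendsto[OF bl lim])
    moreover have "(\<lambda>n. l (v n)) \<longlonglongrightarrow> 0" using v(1) by simp
    ultimately show ?thesis using LIMSEQ_unique by blast
  qed
  have uD: "(norm (z - v0))\<^sup>2 \<le> D"
  proof (rule LIMSEQ_le)
    show "(\<lambda>n. (norm (z - v n))\<^sup>2) \<longlonglongrightarrow> (norm (z - v0))\<^sup>2"
      by (intro tendsto_intros lim)
    have "(\<lambda>n. D + inverse (real (Suc n))) \<longlonglongrightarrow> D + 0"
      by (intro tendsto_intros LIMSEQ_inverse_real_of_nat)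
    then show "(\<lambda>n. D + 1 / real (Suc n)) \<longlonglongrightarrow> D" by (simp add: divide_inverse)
    show "\<exists>N. \<forall>n\<ge>N. (norm (z - v n))\<^sup>2 \<le> D + 1 / real (Suc n)"
      using v(2) less_imp_le by blast
  qed
  define u where "u = z - v0"
  have lu: "l u = 1" using lz lv0 by (simp add: u_def lminus)
  have u0: "u \<noteq> 0" using lu l0 by auto
  have orth: "cinner u k = 0" if lk: "l k = 0" for k
  proof (rule ccontr)
    assume nz: "cinner u k \<noteq> 0"
    then have k0: "k \<noteq> 0" by auto
    define t where "t = cinner u k / complex_of_real ((norm k)\<^sup>2)"
    have "l (v0 + scaleC t k) = 0" using lv0 lk by (simp add: add sc)
    then have "D \<le> (norm (z - (v0 + scaleC t k)))\<^sup>2" by (rule Dle)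
    also have "z - (v0 + scaleC t k) = u - scaleC t k" by (simp add: u_def)
    also have "(norm (u - scaleC t k))\<^sup>2 = (norm u)\<^sup>2 - (cmod (cinner u k))\<^sup>2 / (norm k)\<^sup>2"
      unfolding t_def by (rule proj_identity[OF k0])
    finally have "(cmod (cinner u k))\<^sup>2 / (norm k)\<^sup>2 \<le> 0" using uD by (simp add: u_def)
    moreover have "(cmod (cinner u k))\<^sup>2 / (norm k)\<^sup>2 > 0" using nz k0 by simp
    ultimately show False by simp
  qed
  define w where "w = scaleC (complex_of_real (inverse ((norm u)\<^sup>2))) u"
  show ?thesis
  proof (intro exI allI)
    fix x
    have "l (x - scaleC (l x) u) = 0" using lminus sc lu by simp
    then have "cinner u (x - scaleC (l x) u) = 0" by (rule orth)
    then have "cinner u x = cnj (l x) * complex_of_real ((norm u)\<^sup>2)"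
      by (simp add: cinner_diff_right cinner_scaleC_right cinner_self_real)
    then have "cinner x u = l x * complex_of_real ((norm u)\<^sup>2)"
      using cinner_commute[of x u] by simp
    then show "l x = cinner x w" using u0 by (simp add: w_def cinner_scaleC_right field_simps)
  qed
qed

section \<open>Adjoint\<close>

definition adj :: "('a::chilbert_space \<Rightarrow> 'a) \<Rightarrow> 'a \<Rightarrow> 'a" where
  "adj A = (\<lambda>y. SOME w. \<forall>x. cinner (A x) y = cinner x w)"

lemma adj_eq:
  assumes a: "bounded_op A"
  shows "cinner (A x) y = cinner x (adj A y)"
proof -
  obtain K where K: "K > 0" "\<And>x. norm (A x) \<le> K * norm x" using bounded_op_bound[OF a] by auto
  have "\<exists>w. \<forall>x. cinner (A x) y = cinner x w"
  proof (rule riesz[where K="K * norm y"])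
    show "cinner (A (x + z)) y = cinner (A x) y + cinner (A z) y" for x z
      by (simp add: bounded_opD[OF a] cinner_add_left)
    show "cinner (A (scaleC c x)) y = c * cinner (A x) y" for c x
      by (simp add: bounded_opD[OF a] cinner_scaleC_left)
    show "cmod (cinner (A x) y) \<le> K * norm y * norm x" for x
    proof -
      have "cmod (cinner (A x) y) \<le> norm (A x) * norm y" by (rule Cauchy_Schwarz_c)
      also have "\<dots> \<le> K * norm x * norm y" using K by (intro mult_right_mono) auto
      finally show ?thesis by (simp add: mult_ac)
    qed
  qed
  then show ?thesis unfolding adj_def by (rule someI_ex[THEN spec])
qed

lemma adj_eq2:
  assumes a: "bounded_op A"
  shows "cinner x (A y) = cinner (adj A x) y"
  using adj_eq[OF a, of y x] cinner_commute[of x "A y"] cinner_commute[of "adj A x" y] by simp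

lemma adj_bounded:
  assumes a: "bounded_op A"
  shows "bounded_op (adj A)"
proof -
  obtain K where K: "K > 0" "\<And>x. norm (A x) \<le> K * norm x" using bounded_op_bound[OF a] by auto
  have add: "adj A (y + z) = adj A y + adj A z" for y z
    by (rule cinner_ext_right) (simp add: adj_eq[OF a, symmetric] cinner_add_right)
  have sc: "adj A (scaleC c y) = scaleC c (adj A y)" for c y
    by (rule cinner_ext_right) (simp add: adj_eq[OF a, symmetric] cinner_scaleC_right)
  have bd: "norm (adj A y) \<le> K * norm y" for y
  proof -
    have "complex_of_real ((norm (adj A y))\<^sup>2) = cinner (A (adj A y)) y"
      by (simp add: adj_eq[OF a] cinner_self_real)
    then have "(norm (adj A y))\<^sup>2 = cmod (cinner (A (adj A y)) y)"
      by (metis norm_of_real abs_power2 real_norm_def)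
    also have "\<dots> \<le> norm (A (adj A y)) * norm y" by (rule Cauchy_Schwarz_c)
    also have "\<dots> \<le> K * norm (adj A y) * norm y" using K by (intro mult_right_mono) auto
    finally have h: "norm (adj A y) * norm (adj A y) \<le> norm (adj A y) * (K * norm y)"
      by (simp add: power2_eq_square mult_ac)
    show ?thesis
    proof (cases "norm (adj A y) = 0")
      case True then show ?thesis using K by simp
    next
      case False then show ?thesis using h by simp
    qed
  qed
  show ?thesis unfolding bounded_op_def clinear_op_def using add sc bd by auto
qed

lemma adj_unique:
  assumes "\<And>x y. cinner (A x) y = cinner x (B y)" and "bounded_op A"
  shows "adj A y = B y"
  by (rule cinner_ext_right) (simp add: adj_eq[OF assms(2), symmetric] assms(1))

lemma adj_adj: "bounded_op A \<Longrightarrow> adj (adj A) x = A x"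
  by (rule adj_unique[OF _ adj_bounded]) (simp_all add: adj_eq2)

lemma adj_comp: "bounded_op A \<Longrightarrow> bounded_op B \<Longrightarrow> adj (\<lambda>x. A (B x)) y = adj B (adj A y)"
  by (rule adj_unique) (simp_all add: adj_eq bounded_op_comp')




definition sq_coef :: "nat \<Rightarrow> real" where
  "sq_coef n = (-1)^n * ((1/2::real) gchoose n)"

definition isq_coef :: "nat \<Rightarrow> real" where
  "isq_coef n = (-1)^n * ((-1/2::real) gchoose n)"

lemma gchoose_rec: "(a gchoose Suc n) = (a gchoose n) * (a - real n) / real (Suc n)"
  using gbinomial_mult_1[of a n] by (simp add: field_simps)

lemma sq_coef_rec: "sq_coef (Suc n) = sq_coef n * (real n - 1/2) / real (Suc n)"
  unfolding sq_coef_def gchoose_rec by (simp add: field_simps)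

lemma isq_coef_rec: "isq_coef (Suc n) = isq_coef n * (real n + 1/2) / real (Suc n)"
  unfolding isq_coef_def gchoose_rec by (simp add: field_simps)

lemma sq_coef_0[simp]: "sq_coef 0 = 1" by (simp add: sq_coef_def)
lemma isq_coef_0[simp]: "isq_coef 0 = 1" by (simp add: isq_coef_def)

lemma sq_coef_bound: "\<bar>sq_coef n\<bar> \<le> 1"
proof (induction n)
  case 0 then show ?case by simp
next
  case (Suc n)
  have "\<bar>sq_coef (Suc n)\<bar> = \<bar>sq_coef n\<bar> * (\<bar>real n - 1/2\<bar> / real (Suc n))"
    by (simp add: sq_coef_rec abs_mult)
  also have "\<dots> \<le> 1 * 1"
    using Suc by (intro mult_mono) (auto simp: field_simps)
  finally show ?case by simp
qed

lemma isq_coef_bound: "\<bar>isq_coef n\<bar> \<le> 1"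
proof (induction n)
  case 0 then show ?case by simp
next
  case (Suc n)
  have "\<bar>isq_coef (Suc n)\<bar> = \<bar>isq_coef n\<bar> * (\<bar>real n + 1/2\<bar> / real (Suc n))"
    by (simp add: isq_coef_rec abs_mult)
  also have "\<dots> \<le> 1 * 1"
    using Suc by (intro mult_mono) (auto simp: field_simps)
  finally show ?case by simp
qed

lemma sq_coef_nonpos: "n \<ge> 1 \<Longrightarrow> sq_coef n \<le> 0"
proof (induction n)
  case 0 then show ?case by simp
next
  case (Suc n)
  show ?case
  proof (cases "n = 0")
    case True then show ?thesis by (simp add: sq_coef_rec)
  next
    case False
    then have "sq_coef n \<le> 0" using Suc by simp
    moreover have "(real n - 1/2) / real (Suc n) \<ge> 0" using False by simp
    ultimately have "sq_coef n * ((real n - 1/2) / real (Suc n)) \<le> 0"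
      by (rule mult_nonpos_nonneg)
    then show ?thesis unfolding sq_coef_rec by simp
  qed
qed

lemma sign_split: "i \<le> n \<Longrightarrow> (-1::real)^i * (-1)^(n - i) = (-1)^n"
  by (metis power_add le_add_diff_inverse)

lemma one_gchoose: "((1::real) gchoose n) = (if n = 0 then 1 else if n = 1 then 1 else 0)"
proof -
  have "((1::real) gchoose n) = real (1 choose n)"
    using binomial_gbinomial[of 1 n, where 'a=real] by simp
  then show ?thesis by (cases n) (auto simp: binomial_eq_0)
qed

lemma conv_gen:
  fixes a b :: real
  shows "(\<Sum>i\<le>n. ((-1)^i * (a gchoose i)) * ((-1)^(n-i) * (b gchoose (n - i)))) = (-1)^n * ((a + b) gchoose n)"
proof -
  have "(\<Sum>i\<le>n. ((-1)^i * (a gchoose i)) * ((-1)^(n-i) * (b gchoose (n - i))))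
      = (\<Sum>i\<le>n. (-1)^n * ((a gchoose i) * (b gchoose (n - i))))"
  proof (rule sum.cong[OF refl])
    fix i assume "i \<in> {..n}"
    then have "(-1::real)^i * (-1)^(n - i) = (-1)^n" by (intro sign_split) auto
    then show "((-1)^i * (a gchoose i)) * ((-1)^(n-i) * (b gchoose (n - i))) = (-1)^n * ((a gchoose i) * (b gchoose (n - i)))"
      by (metis (no_types, lifting) mult.assoc mult.left_commute)
  qed
  also have "\<dots> = (-1)^n * (\<Sum>i\<le>n. (a gchoose i) * (b gchoose (n - i)))" by (simp add: sum_distrib_left)
  also have "(\<Sum>i\<le>n. (a gchoose i) * (b gchoose (n - i))) = (a + b) gchoose n"
    using gbinomial_Vandermonde[of a b n] by (simp add: atMost_atLeast0)
  finally show ?thesis .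
qed

lemma sq_conv: "(\<Sum>i\<le>n. sq_coef i * sq_coef (n - i)) = (if n = 0 then 1 else if n = 1 then -1 else 0)"
proof -
  have "(\<Sum>i\<le>n. sq_coef i * sq_coef (n - i)) = (-1)^n * ((1/2 + 1/2) gchoose n)"
    unfolding sq_coef_def by (rule conv_gen)
  also have "(1/2 + 1/2 :: real) = 1" by simp
  finally show ?thesis by (simp add: one_gchoose)
qed

lemma sq_isq_conv: "(\<Sum>i\<le>n. sq_coef i * isq_coef (n - i)) = (if n = 0 then 1 else 0)"
proof -
  have "(\<Sum>i\<le>n. sq_coef i * isq_coef (n - i)) = (-1)^n * ((1/2 + -1/2) gchoose n)"
    unfolding sq_coef_def isq_coef_def by (rule conv_gen)
  also have "(1/2 + -1/2 :: real) = 0" by simp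
  finally show ?thesis by (simp add: gbinomial_0_left)
qed

lemma isq_sq_conv: "(\<Sum>i\<le>n. isq_coef i * sq_coef (n - i)) = (if n = 0 then 1 else 0)"
proof -
  have "(\<Sum>i\<le>n. isq_coef i * sq_coef (n - i)) = (-1)^n * ((-1/2 + 1/2) gchoose n)"
    unfolding sq_coef_def isq_coef_def by (rule conv_gen)
  also have "(-1/2 + 1/2 :: real) = 0" by simp
  finally show ?thesis by (simp add: gbinomial_0_left)
qed

lemma sq_coef_sums:
  assumes "0 \<le> r" "r < 1"
  shows "(\<lambda>n. sq_coef n * r^n) sums ((1 - r) powr (1/2))"
proof -
  have "\<bar>-r\<bar> < 1" using assms by simp
  from gen_binomial_real[OF this, of "1/2"]
  have s: "(\<lambda>n. ((1/2) gchoose n) * (-r)^n) sums ((1 + -r) powr (1/2))" .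
  have eq: "((1/2) gchoose n) * (-r)^n = sq_coef n * r^n" for n
    unfolding sq_coef_def power_minus[of r n] by (simp only: mult_ac)
  show ?thesis using s unfolding eq by simp
qed




definition opser :: "('a::chilbert_space \<Rightarrow> 'a) \<Rightarrow> (nat \<Rightarrow> real) \<Rightarrow> 'a \<Rightarrow> 'a" where
  "opser Q c x = (\<Sum>n. c n *\<^sub>R (Q ^^ n) x)"

lemma scaleC_scaleR_commute: "scaleC d (r *\<^sub>R (v::'a::chilbert_space)) = r *\<^sub>R scaleC d v"
  by (simp add: scaleR_scaleC scaleC_scaleC mult.commute)

lemma bounded_linear_scaleC: "bounded_linear (\<lambda>x::'a::chilbert_space. scaleC d x)"
  using bounded_op_linear[OF bounded_op_scaleC[OF bounded_op_id', of d]] by simp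

lemma bounded_linear_cinner_left: "bounded_linear (\<lambda>v::'a::chilbert_space. cinner v y)"
  by (rule bounded_linear_intro[where K="norm y"])
     (auto simp: cinner_add_left cinner_scaleR_left scaleR_conv_of_real Cauchy_Schwarz_c)

lemma bounded_linear_cinner_right: "bounded_linear (\<lambda>v::'a::chilbert_space. cinner y v)"
  by (rule bounded_linear_intro[where K="norm y"])
     (auto simp: cinner_add_right cinner_scaleR_right scaleR_conv_of_real mult.commute
       intro: order_trans[OF Cauchy_Schwarz_c])

locale contr =
  fixes Q :: "'a::chilbert_space \<Rightarrow> 'a" and r :: real
  assumes Qb: "bounded_op Q" and Qr: "\<And>x. norm (Q x) \<le> r * norm x" and r0: "0 \<le> r" and r1: "r < 1"
begin

lemma pow_bounded: "bounded_op (Q ^^ n)"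
  by (induction n) (auto simp: bounded_op_id' bounded_op_comp' Qb)

lemma pow_bound: "norm ((Q ^^ n) x) \<le> r ^ n * norm x"
proof (induction n)
  case 0 then show ?case by simp
next
  case (Suc n)
  have "norm ((Q ^^ Suc n) x) = norm (Q ((Q ^^ n) x))" by simp
  also have "\<dots> \<le> r * norm ((Q ^^ n) x)" by (rule Qr)
  also have "\<dots> \<le> r * (r ^ n * norm x)" using Suc r0 by (intro mult_left_mono) auto
  finally show ?case by simp
qed

lemma pow_add: "(Q ^^ (m + n)) x = (Q ^^ m) ((Q ^^ n) x)"
  by (simp add: funpow_add)

lemma term_bound: "\<bar>c n\<bar> \<le> 1 \<Longrightarrow> norm (c n *\<^sub>R (Q ^^ n) x) \<le> r ^ n * norm x"
proof -
  assume c: "\<bar>c n\<bar> \<le> 1"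
  have "norm (c n *\<^sub>R (Q ^^ n) x) = \<bar>c n\<bar> * norm ((Q ^^ n) x)" by simp
  also have "\<dots> \<le> 1 * (r ^ n * norm x)" using c pow_bound by (intro mult_mono) auto
  finally show ?thesis by simp
qed

lemma geo_summable: "summable (\<lambda>n. r ^ n * norm x)"
  using summable_geometric[of r] r0 r1 by (intro summable_mult2) auto

lemma geo_suminf: "(\<Sum>n. r ^ n * norm x) = norm x / (1 - r)"
proof -
  have "(\<Sum>n. r ^ n * norm x) = (\<Sum>n. r ^ n) * norm x"
    using summable_geometric[of r] r0 r1 by (intro suminf_mult2[symmetric]) auto
  also have "(\<Sum>n. r ^ n) = 1 / (1 - r)" using suminf_geometric[of r] r0 r1 by simp
  finally show ?thesis by simp
qed

lemma ser_summable_norm: "(\<And>n. \<bar>c n\<bar> \<le> 1) \<Longrightarrow> summable (\<lambda>n. norm (c n *\<^sub>R (Q ^^ n) x))"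
proof -
  assume c: "\<And>n. \<bar>c n\<bar> \<le> 1"
  show ?thesis
  proof (rule summable_comparison_test'[OF geo_summable[of x]])
    fix n
    show "norm (norm (c n *\<^sub>R (Q ^^ n) x)) \<le> r ^ n * norm x"
      using term_bound[of c n x] c by simp
  qed
qed

lemma ser_summable: "(\<And>n. \<bar>c n\<bar> \<le> 1) \<Longrightarrow> summable (\<lambda>n. c n *\<^sub>R (Q ^^ n) x)"
  by (rule summable_norm_cancel[OF ser_summable_norm])

lemma opser_bound:
  assumes c: "\<And>n. \<bar>c n\<bar> \<le> 1"
  shows "norm (opser Q c x) \<le> norm x / (1 - r)"
proof -
  have "norm (opser Q c x) \<le> (\<Sum>n. norm (c n *\<^sub>R (Q ^^ n) x))"
    unfolding opser_def by (rule summable_norm[OF ser_summable_norm[OF c]])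
  also have "\<dots> \<le> (\<Sum>n. r ^ n * norm x)"
    by (intro suminf_le ser_summable_norm geo_summable c) (use term_bound[of c _ x] c in auto)
  also have "\<dots> = norm x / (1 - r)" by (rule geo_suminf)
  finally show ?thesis .
qed

lemma opser_add:
  assumes c: "\<And>n. \<bar>c n\<bar> \<le> 1"
  shows "opser Q c (x + y) = opser Q c x + opser Q c y"
proof -
  have "opser Q c (x + y) = (\<Sum>n. c n *\<^sub>R (Q ^^ n) x + c n *\<^sub>R (Q ^^ n) y)"
    unfolding opser_def by (simp add: bounded_opD[OF pow_bounded] scaleR_add_right)
  also have "\<dots> = opser Q c x + opser Q c y"
    unfolding opser_def by (rule suminf_add[symmetric]) (intro ser_summable c)+
  finally show ?thesis .
qed

lemma opser_scaleC:
  assumes c: "\<And>n. \<bar>c n\<bar> \<le> 1"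
  shows "opser Q c (scaleC d x) = scaleC d (opser Q c x)"
proof -
  have "scaleC d (opser Q c x) = (\<Sum>n. scaleC d (c n *\<^sub>R (Q ^^ n) x))"
    unfolding opser_def by (rule bounded_linear.suminf[OF bounded_linear_scaleC ser_summable[OF c]])
  also have "\<dots> = opser Q c (scaleC d x)"
    unfolding opser_def by (simp add: bounded_opD[OF pow_bounded] scaleC_scaleR_commute)
  finally show ?thesis by simp
qed

lemma opser_bounded:
  assumes c: "\<And>n. \<bar>c n\<bar> \<le> 1"
  shows "bounded_op (opser Q c)"
  unfolding bounded_op_def clinear_op_def
proof (intro conjI allI exI)
  show "opser Q c (x + y) = opser Q c x + opser Q c y" for x y by (rule opser_add[OF c])
  show "opser Q c (scaleC d x) = scaleC d (opser Q c x)" for d x by (rule opser_scaleC[OF c])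
  show "norm (opser Q c x) \<le> (1 / (1 - r)) * norm x" for x
    using opser_bound[OF c, where x=x] by simp
qed

lemma pow_commute:
  assumes "\<And>x. C (Q x) = Q (C x)"
  shows "C ((Q ^^ n) x) = (Q ^^ n) (C x)"
  by (induction n) (simp_all add: assms)

lemma opser_commute:
  assumes c: "\<And>n. \<bar>c n\<bar> \<le> 1" and C: "bounded_op C" and com: "\<And>x. C (Q x) = Q (C x)"
  shows "C (opser Q c x) = opser Q c (C x)"
proof -
  have "C (opser Q c x) = (\<Sum>n. C (c n *\<^sub>R (Q ^^ n) x))"
    unfolding opser_def by (rule bounded_linear.suminf[OF bounded_op_linear[OF C] ser_summable[OF c]])
  also have "\<dots> = opser Q c (C x)"
    unfolding opser_def by (simp add: bounded_op_scaleR[OF C] pow_commute[where C=C, OF com])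
  finally show ?thesis .
qed

lemma opser_cinner_left:
  assumes c: "\<And>n. \<bar>c n\<bar> \<le> 1"
  shows "(\<lambda>n. complex_of_real (c n) * cinner ((Q ^^ n) x) y) sums cinner (opser Q c x) y"
proof -
  have "(\<lambda>n. cinner (c n *\<^sub>R (Q ^^ n) x) y) sums cinner (opser Q c x) y"
    unfolding opser_def
    by (rule bounded_linear.sums[OF bounded_linear_cinner_left summable_sums[OF ser_summable[OF c]]])
  then show ?thesis by (simp add: cinner_scaleR_left)
qed

lemma opser_cinner_right:
  assumes c: "\<And>n. \<bar>c n\<bar> \<le> 1"
  shows "(\<lambda>n. complex_of_real (c n) * cinner y ((Q ^^ n) x)) sums cinner y (opser Q c x)"
proof -
  have "(\<lambda>n. cinner y (c n *\<^sub>R (Q ^^ n) x)) sums cinner y (opser Q c x)"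
    unfolding opser_def
    by (rule bounded_linear.sums[OF bounded_linear_cinner_right summable_sums[OF ser_summable[OF c]]])
  then show ?thesis by (simp add: cinner_scaleR_right)
qed

lemma pow_selfadj:
  assumes sa: "\<And>u v. cinner (Q u) v = cinner u (Q v)"
  shows "cinner ((Q ^^ n) u) v = cinner u ((Q ^^ n) v)"
proof (induction n arbitrary: v)
  case 0 then show ?case by simp
next
  case (Suc n)
  have "cinner ((Q ^^ Suc n) u) v = cinner (Q ((Q ^^ n) u)) v" by simp
  also have "\<dots> = cinner ((Q ^^ n) u) (Q v)" by (rule sa)
  also have "\<dots> = cinner u ((Q ^^ n) (Q v))" by (rule Suc)
  also have "(Q ^^ n) (Q v) = (Q ^^ Suc n) v" by (simp only: funpow_Suc_right o_apply)
  finally show ?case .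
qed

lemma opser_selfadj:
  assumes c: "\<And>n. \<bar>c n\<bar> \<le> 1" and sa: "\<And>u v. cinner (Q u) v = cinner u (Q v)"
  shows "cinner (opser Q c x) y = cinner x (opser Q c y)"
proof -
  have "(\<lambda>n. complex_of_real (c n) * cinner ((Q ^^ n) x) y) sums cinner x (opser Q c y)"
    using opser_cinner_right[OF c, where y=x and x=y] by (simp add: pow_selfadj[OF sa])
  with opser_cinner_left[OF c, where x=x and y=y] show ?thesis by (rule sums_unique2)
qed

lemma opser_finite:
  assumes "\<And>n. n \<ge> 2 \<Longrightarrow> c n = 0"
  shows "opser Q c x = c 0 *\<^sub>R x + c 1 *\<^sub>R Q x"
proof -
  have "opser Q c x = (\<Sum>n\<in>{0,1}. c n *\<^sub>R (Q ^^ n) x)"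
    unfolding opser_def
  proof (rule suminf_finite)
    fix n :: nat assume "n \<notin> {0, 1}"
    then have "n \<ge> 2" by auto
    then show "c n *\<^sub>R (Q ^^ n) x = 0" using assms by simp
  qed simp
  then show ?thesis by simp
qed

lemma opser_mult:
  assumes cb: "\<And>n. \<bar>c n\<bar> \<le> 1" and db: "\<And>n. \<bar>d n\<bar> \<le> 1"
  shows "(\<lambda>k. (\<Sum>i\<le>k. c i * d (k - i)) *\<^sub>R (Q ^^ k) x) sums opser Q c (opser Q d x)"
proof -
  let ?S1 = "\<lambda>n::nat. {..<n} \<times> {..<n}"
  let ?S2 = "\<lambda>n::nat. {(i,j). i + j < n}"
  have S1_mono: "\<And>m n. m \<le> n \<Longrightarrow> ?S1 m \<subseteq> ?S1 n" by auto
  have S2_le_S1: "\<And>n. ?S2 n \<subseteq> ?S1 n" by auto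
  have S1_le_S2: "\<And>n. ?S1 (n div 2) \<subseteq> ?S2 n" by auto
  have finite_S1: "\<And>n. finite (?S1 n)" by simp
  with S2_le_S1 have finite_S2: "\<And>n. finite (?S2 n)" by (rule finite_subset)
  define a where "a i = r ^ i * norm x" for i :: nat
  define b where "b j = r ^ j" for j :: nat
  let ?g = "\<lambda>(i,j). (c i * d j) *\<^sub>R (Q ^^ (i + j)) x"
  let ?f = "\<lambda>(i,j). a i * b j"
  have f_nonneg: "\<And>x. 0 \<le> ?f x" using r0 by (auto simp: a_def b_def)
  then have norm_sum_f: "\<And>A. norm (sum ?f A) = sum ?f A"
    unfolding real_norm_def by (simp only: abs_of_nonneg sum_nonneg [rule_format])
  define z where "z = opser Q d x"
  define y where "y n = (\<Sum>j<n. d j *\<^sub>R (Q ^^ j) x)" for n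
  define P where "P n v = (\<Sum>i<n. c i *\<^sub>R (Q ^^ i) v)" for n v
  have Peq: "sum ?g (?S1 n) = P n (y n)" for n
  proof -
    have "P n (y n) = (\<Sum>i<n. \<Sum>j<n. ?g (i, j))"
      unfolding P_def y_def
      by (simp add: bounded_op_sum[OF pow_bounded] bounded_op_scaleR[OF pow_bounded] scaleR_sum_right pow_add)
    also have "\<dots> = sum ?g (?S1 n)" by (simp add: sum.cartesian_product)
    finally show ?thesis by simp
  qed
  have Pdiff: "P n v - P n w = P n (v - w)" for n v w
    unfolding P_def by (simp add: sum_subtractf bounded_op_diff[OF pow_bounded] scaleR_diff_right)
  have geo_part: "(\<Sum>i<n. r ^ i) \<le> 1 / (1 - r)" for n
  proof -
    have "(\<Sum>i<n. r ^ i) \<le> (\<Sum>i. r ^ i)"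
      using summable_geometric[of r] r0 r1 by (intro sum_le_suminf) auto
    also have "\<dots> = 1 / (1 - r)" using suminf_geometric[of r] r0 r1 by simp
    finally show ?thesis .
  qed
  have Pnorm: "norm (P n v) \<le> norm v / (1 - r)" for n v
  proof -
    have "norm (P n v) \<le> (\<Sum>i<n. norm (c i *\<^sub>R (Q ^^ i) v))" unfolding P_def by (rule norm_sum)
    also have "\<dots> \<le> (\<Sum>i<n. r ^ i * norm v)"
      by (intro sum_mono) (use term_bound[of c _ v] cb in auto)
    also have "\<dots> = (\<Sum>i<n. r ^ i) * norm v" by (simp add: sum_distrib_right)
    also have "\<dots> \<le> (1 / (1 - r)) * norm v" by (intro mult_right_mono geo_part) auto
    finally show ?thesis by simp
  qed
  have yl: "y \<longlonglongrightarrow> z" unfolding y_def z_def opser_def by (rule summable_LIMSEQ[OF ser_summable[OF db]])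
  have Pl: "(\<lambda>n. P n z) \<longlonglongrightarrow> opser Q c z" unfolding P_def opser_def by (rule summable_LIMSEQ[OF ser_summable[OF cb]])
  have "(\<lambda>n. P n (y n) - P n z) \<longlonglongrightarrow> 0"
  proof (rule Lim_null_comparison)
    show "\<forall>\<^sub>F n in sequentially. norm (P n (y n) - P n z) \<le> norm (y n - z) / (1 - r)"
      by (simp add: Pdiff Pnorm)
    have "(\<lambda>n. y n - z) \<longlonglongrightarrow> z - z" by (intro tendsto_diff yl tendsto_const)
    then have "(\<lambda>n. norm (y n - z)) \<longlonglongrightarrow> 0" using tendsto_norm_zero by force
    then show "(\<lambda>n. norm (y n - z) / (1 - r)) \<longlonglongrightarrow> 0" by (rule tendsto_divide_zero)
  qed
  from tendsto_add[OF Pl this]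
  have "(\<lambda>n. P n (y n)) \<longlonglongrightarrow> opser Q c z" by simp
  then have 1: "(\<lambda>n. sum ?g (?S1 n)) \<longlonglongrightarrow> opser Q c z" by (simp add: Peq)

  have "(\<lambda>n. (\<Sum>k<n. a k) * (\<Sum>k<n. b k)) \<longlonglongrightarrow> (\<Sum>k. a k) * (\<Sum>k. b k)"
    by (intro tendsto_mult summable_LIMSEQ) (auto simp: a_def b_def geo_summable summable_geometric r0 r1)
  then have "(\<lambda>n. sum ?f (?S1 n)) \<longlonglongrightarrow> (\<Sum>k. a k) * (\<Sum>k. b k)"
    by (simp only: sum_product sum.Sigma [rule_format] finite_lessThan)
  then have "convergent (\<lambda>n. sum ?f (?S1 n))"
    by (rule convergentI)
  then have Cauchy: "Cauchy (\<lambda>n. sum ?f (?S1 n))"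
    by (rule convergent_Cauchy)
  have gf: "norm (?g p) \<le> ?f p" for p
  proof -
    obtain i j where p: "p = (i, j)" by (cases p)
    have "norm (?g p) = \<bar>c i\<bar> * \<bar>d j\<bar> * norm ((Q ^^ (i + j)) x)" by (simp add: p abs_mult)
    also have "\<dots> \<le> 1 * 1 * (r ^ (i + j) * norm x)"
      using cb db pow_bound by (intro mult_mono) auto
    also have "\<dots> = ?f p" by (simp add: p a_def b_def power_add)
    finally show ?thesis .
  qed
  have zf: "Zfun (\<lambda>n. sum ?f (?S1 n - ?S2 n)) sequentially"
  proof (rule ZfunI, simp only: eventually_sequentially norm_sum_f)
    fix r :: real
    assume r: "0 < r"
    from CauchyD [OF Cauchy r] obtain N
      where "\<forall>m\<ge>N. \<forall>n\<ge>N. norm (sum ?f (?S1 m) - sum ?f (?S1 n)) < r" ..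
    then have "\<And>m n. N \<le> n \<Longrightarrow> n \<le> m \<Longrightarrow> norm (sum ?f (?S1 m - ?S1 n)) < r"
      by (simp only: sum_diff finite_S1 S1_mono)
    then have N: "\<And>m n. N \<le> n \<Longrightarrow> n \<le> m \<Longrightarrow> sum ?f (?S1 m - ?S1 n) < r"
      by (simp only: norm_sum_f)
    show "\<exists>N. \<forall>n\<ge>N. sum ?f (?S1 n - ?S2 n) < r"
    proof (intro exI allI impI)
      fix n
      assume "2 * N \<le> n"
      then have n: "N \<le> n div 2" by simp
      have "sum ?f (?S1 n - ?S2 n) \<le> sum ?f (?S1 n - ?S1 (n div 2))"
        by (intro sum_mono2 finite_Diff finite_S1 f_nonneg Diff_mono subset_refl S1_le_S2)
      also have "\<dots> < r"
        using n div_le_dividend by (rule N)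
      finally show "sum ?f (?S1 n - ?S2 n) < r" .
    qed
  qed
  from zf have "Zfun (\<lambda>n. sum ?g (?S1 n - ?S2 n)) sequentially"
    apply (rule Zfun_le [rule_format])
    apply (simp only: norm_sum_f)
    apply (rule order_trans [OF norm_sum sum_mono])
    apply (rule gf)
    done
  then have 2: "(\<lambda>n. sum ?g (?S1 n) - sum ?g (?S2 n)) \<longlonglongrightarrow> 0"
    unfolding tendsto_Zfun_iff diff_0_right
    by (simp only: sum_diff finite_S1 S2_le_S1)
  with 1 have "(\<lambda>n. sum ?g (?S2 n)) \<longlonglongrightarrow> opser Q c z"
    by (rule Lim_transform2)
  then have 3: "(\<lambda>n. \<Sum>k<n. \<Sum>i\<le>k. (c i * d (k - i)) *\<^sub>R (Q ^^ (i + (k - i))) x) \<longlonglongrightarrow> opser Q c z"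
    by (simp only: sum.triangle_reindex)
  have eq: "(\<Sum>i\<le>k. (c i * d (k - i)) *\<^sub>R (Q ^^ (i + (k - i))) x) = (\<Sum>i\<le>k. c i * d (k - i)) *\<^sub>R (Q ^^ k) x" for k
    by (simp add: scaleR_sum_left)
  show ?thesis using 3 unfolding eq sums_def z_def .
qed

end




definition sa :: "('a::chilbert_space \<Rightarrow> 'a) \<Rightarrow> bool" where
  "sa A \<longleftrightarrow> (\<forall>x y. cinner (A x) y = cinner x (A y))"

lemma sa_D: "sa A \<Longrightarrow> cinner (A x) y = cinner x (A y)"
  unfolding sa_def by auto

lemma Re_cinner_le: "Re (cinner x y) \<le> norm x * norm (y::'a::chilbert_space)"
  using Cauchy_Schwarz_c[of x y] complex_Re_le_cmod[of "cinner x y"] by linarith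

lemma Re_cinner_self: "Re (cinner x x) = (norm (x::'a::chilbert_space))\<^sup>2"
  by (simp add: cinner_self_real)

context contr begin

lemma pow_pos:
  assumes sa: "\<And>u v. cinner (Q u) v = cinner u (Q v)" and pos: "\<And>u. 0 \<le> Re (cinner (Q u) u)"
  shows "0 \<le> Re (cinner ((Q ^^ n) x) x)"
proof -
  define m where "m = n div 2"
  have "n = m + m \<or> n = m + Suc m" unfolding m_def by presburger
  then show ?thesis
  proof
    assume n: "n = m + m"
    have "cinner ((Q ^^ n) x) x = cinner ((Q ^^ m) ((Q ^^ m) x)) x" by (simp add: n pow_add)
    also have "\<dots> = cinner ((Q ^^ m) x) ((Q ^^ m) x)" by (rule pow_selfadj[OF sa])
    finally show ?thesis by (simp add: Re_cinner_self)
  next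
    assume n: "n = m + Suc m"
    define w where "w = (Q ^^ m) x"
    have "cinner ((Q ^^ n) x) x = cinner ((Q ^^ m) (Q w)) x" by (simp only: n pow_add funpow.simps o_apply w_def)
    also have "\<dots> = cinner (Q w) ((Q ^^ m) x)" by (rule pow_selfadj[OF sa])
    finally show ?thesis using pos[of w] by (simp add: w_def)
  qed
qed

lemma pow_le: "Re (cinner ((Q ^^ n) x) x) \<le> r ^ n * (norm x)\<^sup>2"
proof -
  have "Re (cinner ((Q ^^ n) x) x) \<le> norm ((Q ^^ n) x) * norm x" by (rule Re_cinner_le)
  also have "\<dots> \<le> (r ^ n * norm x) * norm x" by (intro mult_right_mono pow_bound) auto
  finally show ?thesis by (simp add: power2_eq_square mult.assoc)
qed

lemma opser_eq_sums:
  assumes c: "\<And>n. \<bar>c n\<bar> \<le> 1" and s: "(\<lambda>n. c n *\<^sub>R (Q ^^ n) x) sums y"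
  shows "opser Q c x = y"
proof -
  have "(\<lambda>n. c n *\<^sub>R (Q ^^ n) x) sums opser Q c x"
    unfolding opser_def by (rule summable_sums[OF ser_summable[OF c]])
  from sums_unique2[OF this s] show ?thesis .
qed

end

lemma sqrt_exists:
  fixes P :: "'a::chilbert_space \<Rightarrow> 'a"
  assumes Pb: "bounded_op P" and Psa: "sa P" and c: "c > 0"
    and coer: "\<And>x. c * (norm x)\<^sup>2 \<le> Re (cinner (P x) x)"
  shows "\<exists>R Ri. bounded_op R \<and> sa R \<and> (\<forall>x. 0 \<le> Re (cinner (R x) x)) \<and> (\<forall>x. R (R x) = P x)
            \<and> bounded_op Ri \<and> (\<forall>x. R (Ri x) = x) \<and> (\<forall>x. Ri (R x) = x)
            \<and> (\<forall>C. bounded_op C \<and> (\<forall>x. C (P x) = P (C x)) \<longrightarrow> (\<forall>x. C (R x) = R (C x)))"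
proof -
  obtain K where K: "K > 0" "\<And>x. norm (P x) \<le> K * norm x" using bounded_op_bound[OF Pb] by auto
  define k where "k = max (max K (K\<^sup>2 / c)) c"
  have kpos: "k > 0" using c by (simp add: k_def)
  have hK: "K \<le> k" by (simp add: k_def)
  have hK2: "K\<^sup>2 \<le> c * k"
  proof -
    have "K\<^sup>2 / c \<le> k" by (simp add: k_def)
    then show ?thesis using c by (simp add: field_simps)
  qed
  have hc: "c \<le> k" by (simp add: k_def)
  define Q where "Q x = x - (1/k) *\<^sub>R P x" for x
  define r where "r = sqrt (1 - c / k)"
  have Qb: "bounded_op Q"
    unfolding Q_def[abs_def] by (intro bounded_op_diff_op bounded_op_id' bounded_op_scaleR_op Pb)
  have Qsa: "cinner (Q u) v = cinner u (Q v)" for u v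
    by (simp add: Q_def cinner_diff_left cinner_diff_right cinner_scaleR_left cinner_scaleR_right sa_D[OF Psa])
  have PQ: "P x = k *\<^sub>R (x - Q x)" for x using kpos by (simp add: Q_def)
  have Pxx: "Re (cinner (P x) x) \<le> K * (norm x)\<^sup>2" for x
  proof -
    have "Re (cinner (P x) x) \<le> norm (P x) * norm x" by (rule Re_cinner_le)
    also have "\<dots> \<le> (K * norm x) * norm x" by (intro mult_right_mono K) auto
    finally show ?thesis by (simp add: power2_eq_square mult.assoc)
  qed
  have Qpos: "0 \<le> Re (cinner (Q u) u)" for u
  proof -
    have "Re (cinner (Q u) u) = (norm u)\<^sup>2 - (1/k) * Re (cinner (P u) u)"
      by (simp add: Q_def cinner_diff_left cinner_scaleR_left Re_cinner_self)
    moreover have "(1/k) * Re (cinner (P u) u) \<le> (1/k) * (K * (norm u)\<^sup>2)"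
      using kpos Pxx by (intro mult_left_mono) auto
    moreover have "(1/k) * (K * (norm u)\<^sup>2) \<le> (norm u)\<^sup>2"
      using kpos hK by (simp add: field_simps mult_right_mono)
    ultimately show ?thesis by linarith
  qed
  have ck: "0 < c / k" "c / k \<le> 1" using c kpos hc by auto
  have r0: "0 \<le> r" and r1: "r < 1" using ck by (auto simp: r_def)
  have r2: "r\<^sup>2 = 1 - c / k" using ck by (simp add: r_def)
  have Qnorm: "norm (Q x) \<le> r * norm x" for x
  proof -
    define N where "N = (norm x)\<^sup>2"
    define p where "p = Re (cinner (P x) x)"
    have A: "(norm (Q x))\<^sup>2 = N + (1/k)\<^sup>2 * (norm (P x))\<^sup>2 - 2 * ((1/k) * p)"
    proof -
      have "(norm (Q x))\<^sup>2 = (norm x)\<^sup>2 + (1/k)\<^sup>2 * (norm (P x))\<^sup>2 - 2 * ((1/k) * Re (cinner x (P x)))"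
        unfolding Q_def norm_sq_diff using kpos by (simp add: cinner_scaleR_right power_mult_distrib power_divide)
      also have "Re (cinner x (P x)) = p" by (simp add: sa_D[OF Psa] p_def)
      finally show ?thesis by (simp add: N_def)
    qed
    have B1: "(1/k)\<^sup>2 * (norm (P x))\<^sup>2 \<le> (1/k)\<^sup>2 * (K * norm x)\<^sup>2"
      using K(2)[of x] K(1) by (intro mult_left_mono power_mono) auto
    have B2: "(1/k)\<^sup>2 * (K * norm x)\<^sup>2 = (K\<^sup>2 / k\<^sup>2) * N"
      by (simp add: power_mult_distrib power_divide N_def)
    have B3: "K\<^sup>2 / k\<^sup>2 \<le> c / k" using hK2 kpos by (simp add: field_simps power2_eq_square)
    have B4: "(K\<^sup>2 / k\<^sup>2) * N \<le> (c / k) * N" using B3 by (intro mult_right_mono) (auto simp: N_def)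
    have C: "(c / k) * N \<le> (1/k) * p"
    proof -
      have "(1/k) * (c * N) \<le> (1/k) * p" using coer[of x] kpos by (intro mult_left_mono) (auto simp: N_def p_def)
      then show ?thesis by simp
    qed
    have "(norm (Q x))\<^sup>2 \<le> N - (c / k) * N" using A B1 B2 B4 C by linarith
    also have "\<dots> = (1 - c / k) * N" by (simp add: left_diff_distrib)
    also have "\<dots> = r\<^sup>2 * N" by (simp only: r2)
    also have "\<dots> = (r * norm x)\<^sup>2" by (simp only: power_mult_distrib N_def)
    finally have "(norm (Q x))\<^sup>2 \<le> (r * norm x)\<^sup>2" .
    then show ?thesis by (rule power2_le_imp_le) (use r0 in simp)
  qed
  interpret contr Q r using Qb Qnorm r0 r1 by unfold_locales auto
  define R0 where "R0 = opser Q sq_coef"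
  define R1 where "R1 = opser Q isq_coef"
  have R0b: "bounded_op R0" unfolding R0_def by (rule opser_bounded[OF sq_coef_bound])
  have R1b: "bounded_op R1" unfolding R1_def by (rule opser_bounded[OF isq_coef_bound])
  have R0sa: "cinner (R0 x) y = cinner x (R0 y)" for x y
    unfolding R0_def by (rule opser_selfadj[OF sq_coef_bound Qsa])
  have R0pos: "0 \<le> Re (cinner (R0 x) x)" for x
  proof -
    have s1: "(\<lambda>n. complex_of_real (sq_coef n) * cinner ((Q ^^ n) x) x) sums cinner (R0 x) x"
      unfolding R0_def by (rule opser_cinner_left[OF sq_coef_bound])
    have s2: "(\<lambda>n. sq_coef n * Re (cinner ((Q ^^ n) x) x)) sums Re (cinner (R0 x) x)"
      using sums_Re[OF s1] by simp
    have s3: "(\<lambda>n. sq_coef n * r ^ n * (norm x)\<^sup>2) sums ((1 - r) powr (1/2) * (norm x)\<^sup>2)"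
      by (rule sums_mult2[OF sq_coef_sums[OF r0 r1]])
    have le: "sq_coef n * r ^ n * (norm x)\<^sup>2 \<le> sq_coef n * Re (cinner ((Q ^^ n) x) x)" for n
    proof (cases "n = 0")
      case True then show ?thesis by (simp add: Re_cinner_self)
    next
      case False
      then have "sq_coef n \<le> 0" by (intro sq_coef_nonpos) auto
      then have "sq_coef n * (r ^ n * (norm x)\<^sup>2) \<le> sq_coef n * Re (cinner ((Q ^^ n) x) x)"
        by (intro mult_left_mono_neg pow_le)
      then show ?thesis by (simp add: mult.assoc)
    qed
    have "(1 - r) powr (1/2) * (norm x)\<^sup>2 \<le> Re (cinner (R0 x) x)"
      by (rule sums_le[OF le s3 s2])
    moreover have "0 \<le> (1 - r) powr (1/2) * (norm x)\<^sup>2" by simp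
    ultimately show ?thesis by linarith
  qed
  have R0sq: "R0 (R0 x) = x - Q x" for x
  proof -
    define e where "e (j::nat) = (if j = 0 then 1 else if j = 1 then -1 else (0::real))" for j
    have eb: "\<bar>e n\<bar> \<le> 1" for n by (simp add: e_def)
    have "(\<lambda>j. e j *\<^sub>R (Q ^^ j) x) sums R0 (R0 x)"
      using opser_mult[where c=sq_coef and d=sq_coef and x=x, OF sq_coef_bound sq_coef_bound] unfolding R0_def sq_conv e_def .
    then have "opser Q e x = R0 (R0 x)" by (rule opser_eq_sums[OF eb])
    moreover have "opser Q e x = x - Q x" by (subst opser_finite) (auto simp: e_def)
    ultimately show ?thesis by simp
  qed
  have R0R1: "R0 (R1 x) = x" for x
  proof -
    define e where "e (j::nat) = (if j = 0 then 1 else (0::real))" for j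
    have eb: "\<bar>e n\<bar> \<le> 1" for n by (simp add: e_def)
    have "(\<lambda>j. e j *\<^sub>R (Q ^^ j) x) sums R0 (R1 x)"
      using opser_mult[where c=sq_coef and d=isq_coef and x=x, OF sq_coef_bound isq_coef_bound] unfolding R0_def R1_def sq_isq_conv e_def .
    then have "opser Q e x = R0 (R1 x)" by (rule opser_eq_sums[OF eb])
    moreover have "opser Q e x = x" by (subst opser_finite) (auto simp: e_def)
    ultimately show ?thesis by simp
  qed
  have R1R0: "R1 (R0 x) = x" for x
  proof -
    define e where "e (j::nat) = (if j = 0 then 1 else (0::real))" for j
    have eb: "\<bar>e n\<bar> \<le> 1" for n by (simp add: e_def)
    have "(\<lambda>j. e j *\<^sub>R (Q ^^ j) x) sums R1 (R0 x)"
      using opser_mult[where c=isq_coef and d=sq_coef and x=x, OF isq_coef_bound sq_coef_bound] unfolding R0_def R1_def isq_sq_conv e_def .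
    then have "opser Q e x = R1 (R0 x)" by (rule opser_eq_sums[OF eb])
    moreover have "opser Q e x = x" by (subst opser_finite) (auto simp: e_def)
    ultimately show ?thesis by simp
  qed
  have R0com: "C (R0 x) = R0 (C x)" if C: "bounded_op C" and com: "\<And>x. C (P x) = P (C x)" for C x
  proof -
    have "C (Q y) = Q (C y)" for y
      by (simp add: Q_def bounded_op_diff[OF C] bounded_op_scaleR[OF C] com)
    then show ?thesis unfolding R0_def by (rule opser_commute[OF sq_coef_bound C])
  qed
  define R where "R x = sqrt k *\<^sub>R R0 x" for x
  define Ri where "Ri x = (1 / sqrt k) *\<^sub>R R1 x" for x
  have sk: "sqrt k * sqrt k = k" "sqrt k > 0" using kpos by auto
  show ?thesis
  proof (intro exI conjI allI impI)
    show "bounded_op R" unfolding R_def[abs_def] by (rule bounded_op_scaleR_op[OF R0b])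
    show "bounded_op Ri" unfolding Ri_def[abs_def] by (rule bounded_op_scaleR_op[OF R1b])
    show "sa R" unfolding sa_def R_def by (simp add: cinner_scaleR_left cinner_scaleR_right R0sa)
    show "0 \<le> Re (cinner (R x) x)" for x
      unfolding R_def using R0pos[of x] sk by (simp add: cinner_scaleR_left)
    show "R (R x) = P x" for x
      unfolding R_def using sk by (simp add: bounded_op_scaleR[OF R0b] R0sq PQ[of x])
    show "R (Ri x) = x" for x
      unfolding R_def Ri_def using sk by (simp add: bounded_op_scaleR[OF R0b] R0R1)
    show "Ri (R x) = x" for x
      unfolding R_def Ri_def using sk by (simp add: bounded_op_scaleR[OF R1b] R1R0)
    fix C x assume "bounded_op C \<and> (\<forall>x. C (P x) = P (C x))"
    then have C: "bounded_op C" and com: "\<And>x. C (P x) = P (C x)" by auto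
    show "C (R x) = R (C x)" unfolding R_def by (simp add: bounded_op_scaleR[OF C] R0com[OF C com])
  qed
qed




lemma posz:
  assumes Ab: "bounded_op A" and Asa: "sa A" and Apos: "\<And>x. 0 \<le> Re (cinner (A x) x)"
    and z: "Re (cinner (A y) y) = 0"
  shows "A y = 0"
proof (rule ccontr)
  assume a0: "A y \<noteq> 0"
  define a where "a = A y"
  define M where "M = Re (cinner (A a) a)"
  define n where "n = (norm a)\<^sup>2"
  have M0: "M \<ge> 0" using Apos by (simp add: M_def)
  have n0: "n > 0" using a0 by (simp add: n_def a_def)
  define t where "t = n / (M + 1)"
  have t0: "t > 0" using n0 M0 by (simp add: t_def)
  define v where "v = y - t *\<^sub>R a"
  have Av: "A v = a - t *\<^sub>R A a" by (simp add: v_def a_def bounded_op_diff[OF Ab] bounded_op_scaleR[OF Ab])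
  have e2: "cinner (A a) y = cinner a a" by (simp add: sa_D[OF Asa] a_def)
  have "cinner (A v) v = cinner a y - complex_of_real t * cinner a a - complex_of_real t * cinner (A a) y
            + complex_of_real t * complex_of_real t * cinner (A a) a"
    apply (subst Av) unfolding v_def by (simp add: cinner_diff_left cinner_diff_right cinner_scaleR_left cinner_scaleR_right algebra_simps)
  also have "\<dots> = cinner (A y) y - complex_of_real (2 * t) * cinner a a + complex_of_real (t * t) * cinner (A a) a"
    unfolding e2 by (simp add: a_def algebra_simps)
  finally have "Re (cinner (A v) v) = Re (cinner (A y) y) - 2 * t * n + t * t * M"
    by (simp add: cinner_self_real n_def M_def)
  then have "0 \<le> - 2 * t * n + t * t * M" using Apos[of v] z by simp
  then have "2 * t * n \<le> t * (t * M)" by (simp add: algebra_simps)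
  then have "2 * n \<le> t * M" using t0 by (simp add: mult.assoc)
  moreover have "t * M < n"
  proof -
    have "t * M = n * (M / (M + 1))" by (simp add: t_def)
    also have "\<dots> < n * 1" using n0 M0 by (intro mult_strict_left_mono) auto
    finally show ?thesis by simp
  qed
  ultimately show False using n0 by simp
qed

lemma sqrt_eq_aux:
  assumes Ab: "bounded_op A" and Asa: "sa A" and Apos: "\<And>x. 0 \<le> Re (cinner (A x) x)"
    and Ainj: "\<And>x. Ai (A x) = x" and Aib: "bounded_op Ai"
    and Rb: "bounded_op R" and Rsa: "sa R" and Rpos: "\<And>x. 0 \<le> Re (cinner (R x) x)"
    and RR: "\<And>x. R (R x) = A (A x)" and com: "\<And>x. A (R x) = R (A x)"
  shows "R x = A x"
proof -
  define y where "y = R x - A x"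
  have "R y + A y = 0"
    by (simp add: y_def bounded_op_diff[OF Rb] bounded_op_diff[OF Ab] RR com)
  then have Ry: "R y = - A y" by (simp add: eq_neg_iff_add_eq_0)
  have "Re (cinner (A y) y) = - Re (cinner (R y) y)" by (simp add: Ry cinner_minus_left)
  then have "Re (cinner (A y) y) = 0" using Apos[of y] Rpos[of y] by simp
  then have "A y = 0" by (rule posz[OF Ab Asa Apos])
  then have "y = 0" using Ainj[of y] bounded_op_0[OF Aib] by simp
  then show ?thesis by (simp add: y_def)
qed

lemma sqrt_unique:
  assumes Ab: "bounded_op A" and Asa: "sa A" and Apos: "\<And>x. 0 \<le> Re (cinner (A x) x)"
    and Ainj: "\<And>x. Ai (A x) = x" and Aib: "bounded_op Ai"
    and Bb: "bounded_op B" and Bsa: "sa B" and Bpos: "\<And>x. 0 \<le> Re (cinner (B x) x)"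
    and Binj: "\<And>x. Bi (B x) = x" and Bib: "bounded_op Bi"
    and AB: "\<And>x. A (A x) = B (B x)"
  shows "A x = B x"
proof -
  define P where "P x = A (A x)" for x
  have Pb: "bounded_op P" unfolding P_def[abs_def] by (rule bounded_op_comp'[OF Ab Ab])
  have Psa: "sa P" unfolding sa_def P_def by (simp add: sa_D[OF Asa])
  obtain L where L: "L > 0" "\<And>x. norm (Ai x) \<le> L * norm x" using bounded_op_bound[OF Aib] by auto
  have coer: "(1 / L\<^sup>2) * (norm x)\<^sup>2 \<le> Re (cinner (P x) x)" for x
  proof -
    have "norm x \<le> L * norm (A x)" using L(2)[of "A x"] Ainj[of x] by simp
    then have "(norm x)\<^sup>2 \<le> (L * norm (A x))\<^sup>2" by (intro power_mono) auto
    then have "(1 / L\<^sup>2) * (norm x)\<^sup>2 \<le> (norm (A x))\<^sup>2" using L(1) by (simp add: field_simps power_mult_distrib)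
    also have "(norm (A x))\<^sup>2 = Re (cinner (P x) x)" by (simp add: P_def sa_D[OF Asa, of "A x" x] Re_cinner_self)
    finally show ?thesis .
  qed
  have "1 / L\<^sup>2 > 0" using L by simp
  from sqrt_exists[OF Pb Psa this coer] obtain R where
    Rb: "bounded_op R" and Rsa: "sa R" and Rpos: "\<And>x. 0 \<le> Re (cinner (R x) x)" and RR: "\<And>x. R (R x) = P x"
    and Rcom: "\<And>C x. bounded_op C \<Longrightarrow> (\<forall>x. C (P x) = P (C x)) \<Longrightarrow> C (R x) = R (C x)"
    by blast
  have comA: "A (R x) = R (A x)" for x by (rule Rcom[OF Ab]) (simp add: P_def)
  have comB: "B (R x) = R (B x)" for x by (rule Rcom[OF Bb]) (simp add: P_def AB)
  have "R x = A x" by (rule sqrt_eq_aux[OF Ab Asa Apos Ainj Aib Rb Rsa Rpos]) (simp_all add: RR P_def comA)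
  moreover have "R x = B x" by (rule sqrt_eq_aux[OF Bb Bsa Bpos Binj Bib Rb Rsa Rpos]) (simp_all add: RR P_def comB AB)
  ultimately show ?thesis by simp
qed




locale frame_ctx =
  fixes M :: "'x measure" and g :: "'x \<Rightarrow> 'a::chilbert_space" and a b :: real
  assumes meas[measurable]: "\<And>\<phi>. (\<lambda>x. cinner \<phi> (g x)) \<in> borel_measurable M"
    and apos: "0 < a" and ab: "a \<le> b"
    and low: "\<And>\<phi>. ennreal (a * (norm \<phi>)\<^sup>2) \<le> (\<integral>\<^sup>+ x. ennreal ((cmod (cinner \<phi> (g x)))\<^sup>2) \<partial>M)"
    and up: "\<And>\<phi>. (\<integral>\<^sup>+ x. ennreal ((cmod (cinner \<phi> (g x)))\<^sup>2) \<partial>M) \<le> ennreal (b * (norm \<phi>)\<^sup>2)"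
begin

definition u :: "'a \<Rightarrow> 'x \<Rightarrow> complex" where "u \<phi> x = cinner \<phi> (g x)"

lemma u_meas[measurable]: "u \<phi> \<in> borel_measurable M"
  unfolding u_def[abs_def] by measurable

lemma cnj_meas[measurable]: "(\<lambda>x. cnj (u \<psi> x)) \<in> borel_measurable M"
  by (rule borel_measurable_continuous_on[OF _ u_meas]) (intro continuous_intros)

lemma sq_int: "integrable M (\<lambda>x. (cmod (u \<phi> x))\<^sup>2)"
proof (rule integrableI_bounded)
  show "(\<lambda>x. (cmod (u \<phi> x))\<^sup>2) \<in> borel_measurable M" by measurable
  have "(\<integral>\<^sup>+ x. ennreal (norm ((cmod (u \<phi> x))\<^sup>2)) \<partial>M) = (\<integral>\<^sup>+ x. ennreal ((cmod (cinner \<phi> (g x)))\<^sup>2) \<partial>M)"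
    by (simp add: u_def)
  also have "\<dots> \<le> ennreal (b * (norm \<phi>)\<^sup>2)" by (rule up)
  also have "\<dots> < \<infinity>" by simp
  finally show "(\<integral>\<^sup>+ x. ennreal (norm ((cmod (u \<phi> x))\<^sup>2)) \<partial>M) < \<infinity>" .
qed

lemma nn_eq: "(\<integral>\<^sup>+ x. ennreal ((cmod (cinner \<phi> (g x)))\<^sup>2) \<partial>M) = ennreal (\<integral> x. (cmod (u \<phi> x))\<^sup>2 \<partial>M)"
  using nn_integral_eq_integral[OF sq_int[of \<phi>]] by (simp add: u_def)

lemma int_nonneg: "0 \<le> (\<integral> x. (cmod (u \<phi> x))\<^sup>2 \<partial>M)"
  by (intro integral_nonneg_AE) simp

lemma int_up: "(\<integral> x. (cmod (u \<phi> x))\<^sup>2 \<partial>M) \<le> b * (norm \<phi>)\<^sup>2"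
proof -
  have "ennreal (\<integral> x. (cmod (u \<phi> x))\<^sup>2 \<partial>M) \<le> ennreal (b * (norm \<phi>)\<^sup>2)"
    using up[of \<phi>] by (simp add: nn_eq)
  moreover have "0 \<le> b * (norm \<phi>)\<^sup>2" using apos ab by simp
  ultimately show ?thesis by (simp add: ennreal_le_iff)
qed

lemma int_low: "a * (norm \<phi>)\<^sup>2 \<le> (\<integral> x. (cmod (u \<phi> x))\<^sup>2 \<partial>M)"
proof -
  have "ennreal (a * (norm \<phi>)\<^sup>2) \<le> ennreal (\<integral> x. (cmod (u \<phi> x))\<^sup>2 \<partial>M)"
    using low[of \<phi>] by (simp add: nn_eq)
  then show ?thesis using int_nonneg[of \<phi>] by (simp add: ennreal_le_iff)
qed

lemma prod_bound: "cmod (p * cnj q) \<le> (cmod p)\<^sup>2 + (cmod q)\<^sup>2"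
proof -
  have "0 \<le> (cmod p - cmod q)\<^sup>2" by simp
  then have "2 * (cmod p * cmod q) \<le> (cmod p)\<^sup>2 + (cmod q)\<^sup>2" by (simp add: power2_eq_square algebra_simps)
  moreover have "0 \<le> cmod p * cmod q" by simp
  ultimately show ?thesis unfolding norm_mult complex_mod_cnj by linarith
qed

lemma prod_int: "integrable M (\<lambda>x. u \<phi> x * cnj (u \<psi> x))"
proof (rule Bochner_Integration.integrable_bound)
  show "integrable M (\<lambda>x. (cmod (u \<phi> x))\<^sup>2 + (cmod (u \<psi> x))\<^sup>2)"
    by (intro Bochner_Integration.integrable_add sq_int)
  show "(\<lambda>x. u \<phi> x * cnj (u \<psi> x)) \<in> borel_measurable M" by measurable
  show "AE x in M. norm (u \<phi> x * cnj (u \<psi> x)) \<le> norm ((cmod (u \<phi> x))\<^sup>2 + (cmod (u \<psi> x))\<^sup>2)"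
    using prod_bound by auto
qed

definition Bf :: "'a \<Rightarrow> 'a \<Rightarrow> complex" where
  "Bf \<phi> \<psi> = (\<integral> x. u \<phi> x * cnj (u \<psi> x) \<partial>M)"

lemma u_add: "u (\<phi>1 + \<phi>2) x = u \<phi>1 x + u \<phi>2 x" by (simp add: u_def cinner_add_left)
lemma u_scaleC: "u (scaleC c \<phi>) x = c * u \<phi> x" by (simp add: u_def cinner_scaleC_left)

lemma Bf_add: "Bf (\<phi>1 + \<phi>2) \<psi> = Bf \<phi>1 \<psi> + Bf \<phi>2 \<psi>"
proof -
  have "Bf (\<phi>1 + \<phi>2) \<psi> = (\<integral> x. u \<phi>1 x * cnj (u \<psi> x) + u \<phi>2 x * cnj (u \<psi> x) \<partial>M)"
    unfolding Bf_def u_add by (simp add: distrib_right)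
  also have "\<dots> = Bf \<phi>1 \<psi> + Bf \<phi>2 \<psi>" unfolding Bf_def by (intro Bochner_Integration.integral_add prod_int)
  finally show ?thesis .
qed

lemma Bf_scaleC: "Bf (scaleC c \<phi>) \<psi> = c * Bf \<phi> \<psi>"
  unfolding Bf_def u_scaleC by (simp add: mult.assoc)

lemma Bf_cnj: "cnj (Bf \<phi> \<psi>) = Bf \<psi> \<phi>"
proof -
  have "cnj (Bf \<phi> \<psi>) = (\<integral> x. cnj (u \<phi> x * cnj (u \<psi> x)) \<partial>M)"
    unfolding Bf_def by (rule Bochner_Integration.integral_cnj[symmetric])
  also have "\<dots> = Bf \<psi> \<phi>" unfolding Bf_def by (simp add: mult.commute)
  finally show ?thesis .
qed

lemma Bf_add2: "Bf \<psi> (\<phi>1 + \<phi>2) = Bf \<psi> \<phi>1 + Bf \<psi> \<phi>2"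
  by (metis Bf_add Bf_cnj complex_cnj_add)

lemma Bf_scaleC2: "Bf \<psi> (scaleC c \<phi>) = cnj c * Bf \<psi> \<phi>"
  by (metis Bf_scaleC Bf_cnj complex_cnj_mult)

lemma Bf_self: "Bf \<phi> \<phi> = complex_of_real (\<integral> x. (cmod (u \<phi> x))\<^sup>2 \<partial>M)"
proof -
  have e: "(\<lambda>x. u \<phi> x * cnj (u \<phi> x)) = (\<lambda>x. complex_of_real ((cmod (u \<phi> x))\<^sup>2))"
    by (rule ext) (rule complex_norm_square[symmetric])
  show ?thesis by (simp only: Bf_def e integral_complex_of_real)
qed

lemma Bf_bound1: "cmod (Bf \<phi> \<psi>) \<le> b * ((norm \<phi>)\<^sup>2 + (norm \<psi>)\<^sup>2)"
proof -
  have "cmod (Bf \<phi> \<psi>) \<le> (\<integral> x. norm (u \<phi> x * cnj (u \<psi> x)) \<partial>M)"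
    unfolding Bf_def by (rule integral_norm_bound)
  also have "\<dots> \<le> (\<integral> x. (cmod (u \<phi> x))\<^sup>2 + (cmod (u \<psi> x))\<^sup>2 \<partial>M)"
    by (intro Bochner_Integration.integral_mono Bochner_Integration.integrable_norm prod_int Bochner_Integration.integrable_add sq_int prod_bound)
  also have "\<dots> = (\<integral> x. (cmod (u \<phi> x))\<^sup>2 \<partial>M) + (\<integral> x. (cmod (u \<psi> x))\<^sup>2 \<partial>M)"
    by (intro Bochner_Integration.integral_add sq_int)
  also have "\<dots> \<le> b * (norm \<phi>)\<^sup>2 + b * (norm \<psi>)\<^sup>2" by (intro add_mono int_up)
  finally show ?thesis by (simp add: distrib_left)
qed

lemma Bf_zero1: "Bf 0 \<psi> = 0"
  using Bf_scaleC[of 0 0 \<psi>] by simp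

lemma Bf_zero2: "Bf \<psi> 0 = 0"
  using Bf_scaleC2[of \<psi> 0 0] by simp

lemma Bf_bound: "cmod (Bf \<phi> \<psi>) \<le> (2 * b) * norm \<phi> * norm \<psi>"
proof (cases "\<phi> = 0 \<or> \<psi> = 0")
  case True then show ?thesis by (auto simp: Bf_zero1 Bf_zero2)
next
  case False
  then have n1: "norm \<phi> > 0" and n2: "norm \<psi> > 0" by auto
  define \<phi>' where "\<phi>' = scaleC (complex_of_real (1 / norm \<phi>)) \<phi>"
  define \<psi>' where "\<psi>' = scaleC (complex_of_real (1 / norm \<psi>)) \<psi>"
  have u1: "norm \<phi>' = 1" using n1 by (simp add: \<phi>'_def norm_scaleC norm_divide)
  have u2: "norm \<psi>' = 1" using n2 by (simp add: \<psi>'_def norm_scaleC norm_divide)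
  have p: "\<phi> = scaleC (complex_of_real (norm \<phi>)) \<phi>'" using n1 by (simp add: \<phi>'_def scaleC_scaleC scaleC_one)
  have q: "\<psi> = scaleC (complex_of_real (norm \<psi>)) \<psi>'" using n2 by (simp add: \<psi>'_def scaleC_scaleC scaleC_one)
  have "Bf \<phi> \<psi> = complex_of_real (norm \<phi>) * complex_of_real (norm \<psi>) * Bf \<phi>' \<psi>'"
    apply (subst p) apply (subst q) by (simp add: Bf_scaleC Bf_scaleC2)
  then have "cmod (Bf \<phi> \<psi>) = norm \<phi> * norm \<psi> * cmod (Bf \<phi>' \<psi>')" by (simp add: norm_mult)
  also have "\<dots> \<le> norm \<phi> * norm \<psi> * (b * (1 + 1))"
    using Bf_bound1[of \<phi>' \<psi>'] u1 u2 by (intro mult_left_mono) auto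
  finally show ?thesis by (simp add: mult_ac)
qed

definition S :: "'a \<Rightarrow> 'a" where "S \<phi> = (SOME w. \<forall>\<psi>. Bf \<psi> \<phi> = cinner \<psi> w)"

lemma S_eq: "Bf \<psi> \<phi> = cinner \<psi> (S \<phi>)"
proof -
  have "\<exists>w. \<forall>\<psi>. Bf \<psi> \<phi> = cinner \<psi> w"
  proof (rule riesz[where K="2 * b * norm \<phi>"])
    show "Bf (x + y) \<phi> = Bf x \<phi> + Bf y \<phi>" for x y by (rule Bf_add)
    show "Bf (scaleC c x) \<phi> = c * Bf x \<phi>" for c x by (rule Bf_scaleC)
    show "cmod (Bf x \<phi>) \<le> 2 * b * norm \<phi> * norm x" for x
      using Bf_bound[of x \<phi>] by (simp add: mult_ac)
  qed
  then show ?thesis unfolding S_def by (rule someI_ex[THEN spec])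
qed

lemma S_eq2: "Bf \<phi> \<psi> = cinner (S \<phi>) \<psi>"
proof -
  have "cnj (Bf \<phi> \<psi>) = cinner \<psi> (S \<phi>)" using S_eq[of \<psi> \<phi>] Bf_cnj[of \<phi> \<psi>] by simp
  then have "Bf \<phi> \<psi> = cnj (cinner \<psi> (S \<phi>))" by (metis complex_cnj_cnj)
  then show ?thesis using cinner_commute[of "S \<phi>" \<psi>] by simp
qed

lemma S_bounded: "bounded_op S"
proof -
  have add: "S (x + y) = S x + S y" for x y
    by (rule cinner_ext_right) (simp add: S_eq[symmetric] Bf_add2 cinner_add_right)
  have sc: "S (scaleC c x) = scaleC c (S x)" for c x
    by (rule cinner_ext_right) (simp add: S_eq[symmetric] Bf_scaleC2 cinner_scaleC_right)
  have bd: "norm (S x) \<le> (2 * b) * norm x" for x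
  proof -
    have "(norm (S x))\<^sup>2 = cmod (cinner (S x) (S x))" by (simp only: cinner_self_real norm_of_real) simp
    also have "cinner (S x) (S x) = Bf (S x) x" by (simp add: S_eq)
    also have "cmod \<dots> \<le> (2 * b) * norm (S x) * norm x" by (rule Bf_bound)
    finally have h: "norm (S x) * norm (S x) \<le> norm (S x) * ((2 * b) * norm x)"
      by (simp add: power2_eq_square mult_ac)
    show ?thesis
    proof (cases "norm (S x) = 0")
      case True then show ?thesis using apos ab by simp
    next
      case False then show ?thesis using h by simp
    qed
  qed
  show ?thesis unfolding bounded_op_def clinear_op_def using add sc bd by blast
qed

lemma S_sa: "sa S"
  unfolding sa_def by (simp add: S_eq[symmetric] S_eq2[symmetric])

lemma S_form: "cinner (S \<phi>) \<phi> = complex_of_real (\<integral> x. (cmod (u \<phi> x))\<^sup>2 \<partial>M)"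
  using S_eq2[of \<phi> \<phi>] Bf_self[of \<phi>] by simp

lemma S_nn: "(\<integral>\<^sup>+ x. ennreal ((cmod (cinner \<phi> (g x)))\<^sup>2) \<partial>M) = ennreal (Re (cinner (S \<phi>) \<phi>))"
  by (simp add: nn_eq S_form)

lemma S_coer: "a * (norm \<phi>)\<^sup>2 \<le> Re (cinner (S \<phi>) \<phi>)"
  using int_low[of \<phi>] by (simp add: S_form)

end

lemma frame_operator:
  fixes g :: "'x \<Rightarrow> 'a::chilbert_space"
  assumes "is_frame M g"
  shows "\<exists>S c. bounded_op S \<and> sa S \<and> c > 0 \<and> (\<forall>\<phi>. c * (norm \<phi>)\<^sup>2 \<le> Re (cinner (S \<phi>) \<phi>))
     \<and> (\<forall>\<phi>. (\<integral>\<^sup>+ x. ennreal ((cmod (cinner \<phi> (g x)))\<^sup>2) \<partial>M) = ennreal (Re (cinner (S \<phi>) \<phi>)))"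
proof -
  from assms obtain a b where m: "\<forall>\<phi>. (\<lambda>x. cinner \<phi> (g x)) \<in> borel_measurable M"
    and hab: "0 < a" "a \<le> b"
    and bds: "\<forall>\<phi>. ennreal (a * (norm \<phi>)\<^sup>2) \<le> (\<integral>\<^sup>+ x. ennreal ((cmod (cinner \<phi> (g x)))\<^sup>2) \<partial>M)
            \<and> (\<integral>\<^sup>+ x. ennreal ((cmod (cinner \<phi> (g x)))\<^sup>2) \<partial>M) \<le> ennreal (b * (norm \<phi>)\<^sup>2)"
    unfolding is_frame_def by blast
  interpret frame_ctx M g a b using m hab bds by unfold_locales auto
  show ?thesis
    apply (rule exI[of _ S], rule exI[of _ a])
    using S_bounded S_sa S_coer S_nn hab(1) by auto
qed




lemma J_bound:
  assumes "f \<in> J_space"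
  obtains Mf where "Mf \<ge> 0" "\<And>x. norm (f x) \<le> Mf"
proof -
  from assms obtain a where a: "\<forall>y\<in>range f. norm y \<le> a" unfolding J_space_def bounded_iff by auto
  show ?thesis
  proof (rule that[of "max a 0"])
    show "0 \<le> max a 0" by simp
    fix x
    have "norm (f x) \<le> a" using a by auto
    then show "norm (f x) \<le> max a 0" by linarith
  qed
qed

lemma J_spaceI: "(\<And>x. norm (f x) \<le> c) \<Longrightarrow> f \<in> J_space"
  unfolding J_space_def bounded_iff by auto

lemma J_diff: "f \<in> J_space \<Longrightarrow> g \<in> J_space \<Longrightarrow> (\<lambda>x. f x - g x) \<in> J_space"
proof -
  assume f: "f \<in> J_space" and g: "g \<in> J_space"
  obtain a where a: "\<And>x. norm (f x) \<le> a" using J_bound[OF f] by auto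
  obtain b where b: "\<And>x. norm (g x) \<le> b" using J_bound[OF g] by auto
  show ?thesis
  proof (rule J_spaceI[where c="a + b"])
    fix x
    have "norm (f x - g x) \<le> norm (f x) + norm (g x)" by (rule norm_triangle_ineq4)
    also have "\<dots> \<le> a + b" using a b by (intro add_mono)
    finally show "norm (f x - g x) \<le> a + b" .
  qed
qed

lemma J_norm_ge: "f \<in> J_space \<Longrightarrow> norm (f x) \<le> J_norm f"
proof -
  assume f: "f \<in> J_space"
  obtain a where a: "\<And>x. norm (f x) \<le> a" using J_bound[OF f] by auto
  have "bdd_above (range (\<lambda>x. norm (f x)))" by (rule bdd_aboveI[where M=a]) (use a in auto)
  then show ?thesis unfolding J_norm_def by (rule cSUP_upper[OF UNIV_I])
qed

lemma J_norm_le: "(\<And>x. norm (f x) \<le> c) \<Longrightarrow> J_norm f \<le> c"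
  unfolding J_norm_def by (rule cSUP_least) auto

lemma cont_core:
  assumes Ab: "bounded_op A" and fJ: "f \<in> J_space" and e: "e > 0"
  shows "\<exists>d>0. \<forall>B g. bounded_op B \<longrightarrow> g \<in> J_space \<longrightarrow> op_dist B A < d \<longrightarrow> J_dist g f < d
            \<longrightarrow> J_dist (B \<circ> g) (A \<circ> f) < e"
proof -
  obtain Mf where Mf: "Mf \<ge> 0" "\<And>x. norm (f x) \<le> Mf" using J_bound[OF fJ] by auto
  define nA where "nA = onorm A"
  have nA0: "nA \<ge> 0" unfolding nA_def by (rule onorm_pos_le[OF bounded_op_linear[OF Ab]])
  define C where "C = nA + Mf + 1"
  have C0: "C > 0" using nA0 Mf by (simp add: C_def)
  define d where "d = min 1 (e / (2 * C))"
  have d0: "d > 0" using e C0 by (simp add: d_def)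
  have d1: "d \<le> 1" by (simp add: d_def)
  have d2: "C * d \<le> e / 2"
  proof -
    have "d \<le> e / (2 * C)" by (simp add: d_def)
    then have "C * d \<le> C * (e / (2 * C))" using C0 by (intro mult_left_mono) auto
    also have "\<dots> = e / 2" using C0 by simp
    finally show ?thesis .
  qed
  show ?thesis
  proof (intro exI[of _ d] conjI allI impI d0)
    fix B g assume Bb: "bounded_op B" and gJ: "g \<in> J_space" and dB: "op_dist B A < d" and dg: "J_dist g f < d"
    define D1 where "D1 x = B x - A x" for x
    have D1b: "bounded_linear D1" unfolding D1_def[abs_def]
      by (rule bounded_op_linear[OF bounded_op_diff_op[OF Bb Ab]])
    have nD: "onorm D1 < d" using dB by (simp add: op_dist_def D1_def[abs_def])
    have nD0: "onorm D1 \<ge> 0" by (rule onorm_pos_le[OF D1b])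
    have Beq: "B = (\<lambda>x. A x + D1 x)" by (rule ext) (simp add: D1_def)
    have nB: "onorm B \<le> nA + onorm D1"
      unfolding nA_def by (subst Beq) (rule onorm_triangle[OF bounded_op_linear[OF Ab] D1b])
    have gf: "norm (g x - f x) \<le> d" for x
    proof -
      have "norm (g x - f x) \<le> J_norm (\<lambda>x. g x - f x)" by (rule J_norm_ge[OF J_diff[OF gJ fJ]])
      also have "\<dots> < d" using dg by (simp add: J_dist_def)
      finally show ?thesis by simp
    qed
    have pw: "norm ((B \<circ> g) x - (A \<circ> f) x) \<le> C * d" for x
    proof -
      have "(B \<circ> g) x - (A \<circ> f) x = B (g x - f x) + D1 (f x)"
        by (simp add: bounded_op_diff[OF Bb] D1_def)
      then have "norm ((B \<circ> g) x - (A \<circ> f) x) \<le> norm (B (g x - f x)) + norm (D1 (f x))"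
        by (simp add: norm_triangle_ineq)
      also have "norm (B (g x - f x)) \<le> onorm B * norm (g x - f x)"
        by (rule onorm[OF bounded_op_linear[OF Bb]])
      also have "\<dots> \<le> (nA + d) * d"
        using nB nD gf[of x] nA0 nD0 by (intro mult_mono) auto
      also have "norm (D1 (f x)) \<le> onorm D1 * norm (f x)" by (rule onorm[OF D1b])
      also have "\<dots> \<le> d * Mf" using nD nD0 Mf by (intro mult_mono) auto
      also have "(nA + d) * d + d * Mf = (nA + d + Mf) * d" by (simp add: algebra_simps)
      also have "\<dots> \<le> C * d" using d1 d0 by (intro mult_right_mono) (auto simp: C_def)
      finally show ?thesis by simp
    qed
    have "J_dist (B \<circ> g) (A \<circ> f) \<le> C * d" unfolding J_dist_def by (rule J_norm_le[OF pw])
    also have "\<dots> < e" using d2 e by simp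
    finally show "J_dist (B \<circ> g) (A \<circ> f) < e" .
  qed
qed

lemma continuity:
  assumes D: "\<And>A f. (A, f) \<in> D \<Longrightarrow> bounded_op A \<and> f \<in> J_space"
  shows "continuous_OJ D (\<lambda>(A, f). A \<circ> f)"
  unfolding continuous_OJ_def
proof (intro ballI)
  fix p assume pD: "p \<in> D"
  obtain A f where p: "p = (A, f)" by (cases p)
  have Af: "bounded_op A" "f \<in> J_space" using D pD p by auto
  show "case p of (A, f) \<Rightarrow> \<forall>e>0. \<exists>d>0. \<forall>(B, g)\<in>D. op_dist B A < d \<and> J_dist g f < d \<longrightarrow>
      J_dist ((\<lambda>(A, f). A \<circ> f) (B, g)) ((\<lambda>(A, f). A \<circ> f) (A, f)) < e"
    unfolding p prod.case
  proof (intro allI impI)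
    fix e :: real assume e: "e > 0"
    obtain d where d: "d > 0" and dd: "\<And>B g. bounded_op B \<Longrightarrow> g \<in> J_space \<Longrightarrow> op_dist B A < d \<Longrightarrow> J_dist g f < d
            \<Longrightarrow> J_dist (B \<circ> g) (A \<circ> f) < e"
      using cont_core[OF Af e] by blast
    show "\<exists>d>0. \<forall>(B, g)\<in>D. op_dist B A < d \<and> J_dist g f < d \<longrightarrow> J_dist (B \<circ> g) (A \<circ> f) < e"
    proof (intro exI[of _ d] conjI d ballI)
      fix q assume qD: "q \<in> D"
      obtain B g where q: "q = (B, g)" by (cases q)
      have Bg: "bounded_op B" "g \<in> J_space" using D qD q by auto
      show "case q of (B, g) \<Rightarrow> op_dist B A < d \<and> J_dist g f < d \<longrightarrow> J_dist (B \<circ> g) (A \<circ> f) < e"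
        unfolding q prod.case using dd[OF Bg] by blast
    qed
  qed
qed




lemma GL_iff: "A \<in> GL \<longleftrightarrow> bounded_op A \<and> (\<exists>Ai. bounded_op Ai \<and> (\<forall>x. A (Ai x) = x) \<and> (\<forall>x. Ai (A x) = x))"
  unfolding GL_def by (auto simp: fun_eq_iff)

lemma GLI: "bounded_op A \<Longrightarrow> bounded_op Ai \<Longrightarrow> (\<And>x. A (Ai x) = x) \<Longrightarrow> (\<And>x. Ai (A x) = x) \<Longrightarrow> A \<in> GL"
  unfolding GL_iff by blast

lemma GLE:
  assumes "A \<in> GL"
  obtains Ai where "bounded_op A" "bounded_op Ai" "\<And>x. A (Ai x) = x" "\<And>x. Ai (A x) = x"
  using assms unfolding GL_iff by blast

lemma adj_id: "adj (\<lambda>x. x) y = (y::'a::chilbert_space)"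
  by (rule adj_unique[OF _ bounded_op_id']) simp

lemma adj_inv:
  assumes "bounded_op A" "bounded_op Ai" "\<And>x. A (Ai x) = x"
  shows "adj Ai (adj A \<phi>) = \<phi>"
proof -
  have "adj Ai (adj A \<phi>) = adj (\<lambda>x. A (Ai x)) \<phi>" by (rule adj_comp[OF assms(1,2), symmetric])
  also have "(\<lambda>x. A (Ai x)) = (\<lambda>x. x)" using assms(3) by auto
  finally show ?thesis by (simp add: adj_id)
qed

lemma parseval_meas: "is_parseval_frame M f \<Longrightarrow> (\<lambda>x. cinner \<phi> (f x)) \<in> borel_measurable M"
  unfolding is_parseval_frame_def by auto

lemma parseval_nn: "is_parseval_frame M f \<Longrightarrow>
   (\<integral>\<^sup>+ x. ennreal ((cmod (cinner \<phi> (f x)))\<^sup>2) \<partial>M) = ennreal ((norm \<phi>)\<^sup>2)"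
  unfolding is_parseval_frame_def by auto

lemma parseval_adj:
  assumes P: "is_parseval_frame M f" and T: "bounded_op T"
  shows "(\<lambda>x. cinner \<phi> (T (f x))) \<in> borel_measurable M"
    and "(\<integral>\<^sup>+ x. ennreal ((cmod (cinner \<phi> (T (f x))))\<^sup>2) \<partial>M) = ennreal ((norm (adj T \<phi>))\<^sup>2)"
proof -
  have e: "(\<lambda>x. cinner \<phi> (T (f x))) = (\<lambda>x. cinner (adj T \<phi>) (f x))"
    by (rule ext) (rule adj_eq2[OF T])
  show "(\<lambda>x. cinner \<phi> (T (f x))) \<in> borel_measurable M" unfolding e by (rule parseval_meas[OF P])
  have e2: "cinner \<phi> (T (f x)) = cinner (adj T \<phi>) (f x)" for x by (rule adj_eq2[OF T])
  show "(\<integral>\<^sup>+ x. ennreal ((cmod (cinner \<phi> (T (f x))))\<^sup>2) \<partial>M) = ennreal ((norm (adj T \<phi>))\<^sup>2)"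
    by (simp only: e2) (rule parseval_nn[OF P])
qed

lemma J_comp: "bounded_op A \<Longrightarrow> f \<in> J_space \<Longrightarrow> (\<lambda>x. A (f x)) \<in> J_space"
proof -
  assume A: "bounded_op A" and f: "f \<in> J_space"
  obtain K where K: "K > 0" "\<And>x. norm (A x) \<le> K * norm x" using bounded_op_bound[OF A] by auto
  obtain Mf where Mf: "Mf \<ge> 0" "\<And>x. norm (f x) \<le> Mf" using J_bound[OF f] by auto
  show ?thesis
  proof (rule J_spaceI[where c="K * Mf"])
    fix x
    have "norm (A (f x)) \<le> K * norm (f x)" by (rule K)
    also have "\<dots> \<le> K * Mf" using K Mf by (intro mult_left_mono) auto
    finally show "norm (A (f x)) \<le> K * Mf" .
  qed
qed

lemma img_frame:
  assumes A: "A \<in> GL" and fP: "is_parseval_frame M f" and fJ: "f \<in> J_space"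
  shows "A \<circ> f \<in> frames M"
proof -
  obtain Ai where Ab: "bounded_op A" and Aib: "bounded_op Ai" and AAi: "\<And>x. A (Ai x) = x" and AiA: "\<And>x. Ai (A x) = x"
    using GLE[OF A] by blast
  obtain K where K: "K > 0" "\<And>x. norm (adj A x) \<le> K * norm x" using bounded_op_bound[OF adj_bounded[OF Ab]] by auto
  obtain L where L: "L > 0" "\<And>x. norm (adj Ai x) \<le> L * norm x" using bounded_op_bound[OF adj_bounded[OF Aib]] by auto
  have lowb: "(1 / L\<^sup>2) * (norm \<phi>)\<^sup>2 \<le> (norm (adj A \<phi>))\<^sup>2" for \<phi>
  proof -
    have "norm \<phi> \<le> L * norm (adj A \<phi>)" using L(2)[of "adj A \<phi>"] adj_inv[OF Ab Aib AAi, of \<phi>] by simp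
    then have "(norm \<phi>)\<^sup>2 \<le> (L * norm (adj A \<phi>))\<^sup>2" by (intro power_mono) auto
    then show ?thesis using L(1) by (simp add: field_simps power_mult_distrib)
  qed
  have upb: "(norm (adj A \<phi>))\<^sup>2 \<le> K\<^sup>2 * (norm \<phi>)\<^sup>2" for \<phi>
  proof -
    have "(norm (adj A \<phi>))\<^sup>2 \<le> (K * norm \<phi>)\<^sup>2" using K(2)[of \<phi>] by (intro power_mono) auto
    then show ?thesis by (simp add: power_mult_distrib)
  qed
  define a where "a = min (1 / L\<^sup>2) (K\<^sup>2)"
  have a0: "a > 0" using K L by (simp add: a_def)
  have ab: "a \<le> K\<^sup>2" by (simp add: a_def)
  have meas: "\<forall>\<phi>. (\<lambda>x. cinner \<phi> ((A \<circ> f) x)) \<in> borel_measurable M"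
    using parseval_adj(1)[OF fP Ab] by (simp add: comp_def)
  have bds: "\<forall>\<phi>. ennreal (a * (norm \<phi>)\<^sup>2) \<le> (\<integral>\<^sup>+ x. ennreal ((cmod (cinner \<phi> ((A \<circ> f) x)))\<^sup>2) \<partial>M)
     \<and> (\<integral>\<^sup>+ x. ennreal ((cmod (cinner \<phi> ((A \<circ> f) x)))\<^sup>2) \<partial>M) \<le> ennreal (K\<^sup>2 * (norm \<phi>)\<^sup>2)"
  proof
    fix \<phi>
    have nn: "(\<integral>\<^sup>+ x. ennreal ((cmod (cinner \<phi> ((A \<circ> f) x)))\<^sup>2) \<partial>M) = ennreal ((norm (adj A \<phi>))\<^sup>2)"
      using parseval_adj(2)[OF fP Ab] by (simp add: comp_def)
    have "a * (norm \<phi>)\<^sup>2 \<le> (1 / L\<^sup>2) * (norm \<phi>)\<^sup>2" by (intro mult_right_mono) (auto simp: a_def)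
    also have "\<dots> \<le> (norm (adj A \<phi>))\<^sup>2" by (rule lowb)
    finally have l: "a * (norm \<phi>)\<^sup>2 \<le> (norm (adj A \<phi>))\<^sup>2" .
    show "ennreal (a * (norm \<phi>)\<^sup>2) \<le> (\<integral>\<^sup>+ x. ennreal ((cmod (cinner \<phi> ((A \<circ> f) x)))\<^sup>2) \<partial>M)
     \<and> (\<integral>\<^sup>+ x. ennreal ((cmod (cinner \<phi> ((A \<circ> f) x)))\<^sup>2) \<partial>M) \<le> ennreal (K\<^sup>2 * (norm \<phi>)\<^sup>2)"
      unfolding nn using ennreal_leI[OF l] ennreal_leI[OF upb] by blast
  qed
  have fr: "is_frame M (A \<circ> f)"
    unfolding is_frame_def using meas bds a0 ab by blast
  have "A \<circ> f \<in> J_space" using J_comp[OF Ab fJ] by (simp add: comp_def)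
  then show ?thesis using fr unfolding frames_def by simp
qed

lemma unitary_norm:
  assumes "V \<in> unitary_group" shows "norm (V x) = norm x"
proof -
  have "cinner (V x) (V x) = cinner x x" using assms unfolding unitary_group_def by auto
  then have "(norm (V x))\<^sup>2 = (norm x)\<^sup>2" by (simp add: cinner_self_real del: of_real_power)
  then show ?thesis by (simp add: power2_eq_iff_nonneg)
qed

lemma unitary_inv:
  assumes V: "V \<in> unitary_group"
  obtains Vi where "bounded_op V" "bounded_op Vi" "\<And>x. V (Vi x) = x" "\<And>x. Vi (V x) = x"
proof -
  have Vb: "bounded_op V" and bij: "bij V" using V unfolding unitary_group_def by auto
  define Vi where "Vi = inv V"
  have VVi: "V (Vi x) = x" for x unfolding Vi_def by (rule surj_f_inv_f[OF bij_is_surj[OF bij]])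
  have ViV: "Vi (V x) = x" for x unfolding Vi_def by (rule inv_f_f[OF bij_is_inj[OF bij]])
  have inj: "V x = V y \<Longrightarrow> x = y" for x y using bij_is_inj[OF bij] by (auto dest: injD)
  have add: "Vi (x + y) = Vi x + Vi y" for x y
    by (rule inj) (simp add: VVi bounded_opD[OF Vb])
  have sc: "Vi (scaleC c x) = scaleC c (Vi x)" for c x
    by (rule inj) (simp add: VVi bounded_opD[OF Vb])
  have bd: "norm (Vi x) \<le> 1 * norm x" for x
    using unitary_norm[OF V, of "Vi x"] by (simp add: VVi)
  have "bounded_op Vi" unfolding bounded_op_def clinear_op_def using add sc bd by blast
  then show ?thesis using that Vb VVi ViV by blast
qed

lemma id_unitary: "(\<lambda>x. x) \<in> unitary_group"
  unfolding unitary_group_def using bounded_op_id' by (auto simp: bij_def)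




lemma frame_decomp:
  assumes gF: "g \<in> frames M"
  shows "\<exists>R Ri. R \<in> GL_plus \<and> bounded_op Ri \<and> (\<forall>x. R (Ri x) = x) \<and> (\<forall>x. Ri (R x) = x)
            \<and> Ri \<circ> g \<in> parseval_frames M"
proof -
  have gJ: "g \<in> J_space" and gfr: "is_frame M g" using gF unfolding frames_def by auto
  have gmeas: "(\<lambda>x. cinner \<phi> (g x)) \<in> borel_measurable M" for \<phi> using gfr unfolding is_frame_def by auto
  obtain S c where Sb: "bounded_op S" and Ssa: "sa S" and c0: "c > 0"
    and coer: "\<forall>\<phi>. c * (norm \<phi>)\<^sup>2 \<le> Re (cinner (S \<phi>) \<phi>)"
    and Snn: "\<forall>\<phi>. (\<integral>\<^sup>+ x. ennreal ((cmod (cinner \<phi> (g x)))\<^sup>2) \<partial>M) = ennreal (Re (cinner (S \<phi>) \<phi>))"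
    using frame_operator[OF gfr] by blast
  obtain R Ri where Rb: "bounded_op R" and Rsa: "sa R" and Rpos: "\<forall>x. 0 \<le> Re (cinner (R x) x)"
    and RR: "\<forall>x. R (R x) = S x" and Rib: "bounded_op Ri" and RRi: "\<forall>x. R (Ri x) = x" and RiR: "\<forall>x. Ri (R x) = x"
    using sqrt_exists[OF Sb Ssa c0 coer[rule_format]] by blast
  have RGL: "R \<in> GL_plus"
    unfolding GL_plus_def positive_op_def using GLI[of R Ri] Rb Rib RRi RiR Rsa Rpos unfolding sa_def by auto
  have Risa: "cinner (Ri x) y = cinner x (Ri y)" for x y
  proof -
    have "cinner (Ri x) y = cinner (Ri x) (R (Ri y))" using RRi by simp
    also have "\<dots> = cinner (R (Ri x)) (Ri y)" by (simp add: sa_D[OF Rsa])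
    also have "\<dots> = cinner x (Ri y)" using RRi by simp
    finally show ?thesis .
  qed
  have e: "cinner \<phi> (Ri (g x)) = cinner (Ri \<phi>) (g x)" for \<phi> x by (simp add: Risa)
  have hP: "is_parseval_frame M (Ri \<circ> g)"
    unfolding is_parseval_frame_def comp_def
  proof (intro conjI allI)
    fix \<phi>
    show "(\<lambda>x. cinner \<phi> (Ri (g x))) \<in> borel_measurable M" by (simp only: e) (rule gmeas)
    have "(\<integral>\<^sup>+ x. ennreal ((cmod (cinner \<phi> (Ri (g x))))\<^sup>2) \<partial>M) = ennreal (Re (cinner (S (Ri \<phi>)) (Ri \<phi>)))"
      by (simp only: e Snn)
    also have "S (Ri \<phi>) = R \<phi>" using RR RRi by metis
    also have "cinner (R \<phi>) (Ri \<phi>) = cinner \<phi> \<phi>" by (simp add: sa_D[OF Rsa] RRi)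
    finally show "(\<integral>\<^sup>+ x. ennreal ((cmod (cinner \<phi> (Ri (g x))))\<^sup>2) \<partial>M) = ennreal ((norm \<phi>)\<^sup>2)"
      by (simp add: Re_cinner_self)
  qed
  have hJ: "Ri \<circ> g \<in> J_space" using J_comp[OF Rib gJ] by (simp add: comp_def)
  show ?thesis using RGL Rib RRi RiR hP hJ unfolding parseval_frames_def by blast
qed

lemma GL_plus_GL: "A \<in> GL_plus \<Longrightarrow> A \<in> GL" unfolding GL_plus_def by auto

lemma zeta_plus_surj:
  assumes "g \<in> frames M"
  shows "\<exists>A h. A \<in> GL_plus \<and> h \<in> parseval_frames M \<and> g = A \<circ> h"
proof -
  obtain R Ri where R: "R \<in> GL_plus" "\<forall>x. R (Ri x) = x" "Ri \<circ> g \<in> parseval_frames M"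
    using frame_decomp[OF assms] by blast
  have "g = R \<circ> (Ri \<circ> g)" using R(2) by (auto simp: fun_eq_iff)
  then show ?thesis using R by blast
qed

lemma zeta_surj:
  assumes T: "unitary_transversal M F0bar" and gF: "g \<in> frames M"
  shows "\<exists>A h. A \<in> GL \<and> h \<in> F0bar \<and> g = A \<circ> h"
proof -
  obtain R Ri where R: "R \<in> GL_plus" "bounded_op Ri" "\<forall>x. R (Ri x) = x" "\<forall>x. Ri (R x) = x"
    "Ri \<circ> g \<in> parseval_frames M"
    using frame_decomp[OF gF] by blast
  have Rb: "bounded_op R" using R(1) unfolding GL_plus_def positive_op_def by auto
  obtain h V where h: "h \<in> F0bar" and V: "V \<in> unitary_group" and hV: "h = V \<circ> (Ri \<circ> g)"
    using T R(5) unfolding unitary_transversal_def by blast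
  obtain Vi where Vb: "bounded_op V" and Vib: "bounded_op Vi" and VVi: "\<And>x. V (Vi x) = x" and ViV: "\<And>x. Vi (V x) = x"
    using unitary_inv[OF V] by blast
  define A where "A x = R (Vi x)" for x
  have AGL: "A \<in> GL"
  proof (rule GLI[where Ai="\<lambda>x. V (Ri x)"])
    show "bounded_op A" unfolding A_def[abs_def] by (rule bounded_op_comp'[OF Rb Vib])
    show "bounded_op (\<lambda>x. V (Ri x))" by (rule bounded_op_comp'[OF Vb R(2)])
    show "A (V (Ri x)) = x" for x by (simp add: A_def ViV R(3))
    show "V (Ri (A x)) = x" for x by (simp add: A_def VVi R(4))
  qed
  have "g = A \<circ> h" using R(3) by (simp add: fun_eq_iff hV A_def ViV)
  then show ?thesis using AGL h by blast
qed

lemma zeta_inj: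
  assumes T: "unitary_transversal M F0bar" and A: "A \<in> GL" and B: "B \<in> GL"
    and f: "f \<in> F0bar" and g: "g \<in> F0bar" and eq: "A \<circ> f = B \<circ> g"
  shows "A = B \<and> f = g"
proof -
  have sub: "F0bar \<subseteq> parseval_frames M" using T unfolding unitary_transversal_def by auto
  have fP: "is_parseval_frame M f" and gP: "is_parseval_frame M g"
    using f g sub unfolding parseval_frames_def by auto
  obtain Ai where Ab: "bounded_op A" and Aib: "bounded_op Ai" and AAi: "\<And>x. A (Ai x) = x" and AiA: "\<And>x. Ai (A x) = x"
    using GLE[OF A] by blast
  obtain Bi where Bb: "bounded_op B" and Bib: "bounded_op Bi" and BBi: "\<And>x. B (Bi x) = x" and BiB: "\<And>x. Bi (B x) = x"
    using GLE[OF B] by blast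
  define Tm where "Tm x = Bi (A x)" for x
  define Ti where "Ti x = Ai (B x)" for x
  have Tmb: "bounded_op Tm" unfolding Tm_def[abs_def] by (rule bounded_op_comp'[OF Bib Ab])
  have TmTi: "Tm (Ti x) = x" for x by (simp add: Tm_def Ti_def AAi BiB)
  have TiTm: "Ti (Tm x) = x" for x by (simp add: Tm_def Ti_def AiA BBi)
  have gT: "g x = Tm (f x)" for x
  proof -
    have "A (f x) = B (g x)" using eq by (simp add: fun_eq_iff)
    then show ?thesis by (metis BiB Tm_def)
  qed
  have iso: "norm (adj Tm \<phi>) = norm \<phi>" for \<phi>
  proof -
    have "ennreal ((norm (adj Tm \<phi>))\<^sup>2) = (\<integral>\<^sup>+ x. ennreal ((cmod (cinner \<phi> (Tm (f x))))\<^sup>2) \<partial>M)"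
      by (rule parseval_adj(2)[OF fP Tmb, symmetric])
    also have "\<dots> = (\<integral>\<^sup>+ x. ennreal ((cmod (cinner \<phi> (g x)))\<^sup>2) \<partial>M)" by (simp add: gT)
    also have "\<dots> = ennreal ((norm \<phi>)\<^sup>2)" by (rule parseval_nn[OF gP])
    finally have "(norm (adj Tm \<phi>))\<^sup>2 = (norm \<phi>)\<^sup>2" by simp
    then show ?thesis by (simp add: power2_eq_iff_nonneg)
  qed
  have adjTmb: "bounded_op (adj Tm)" by (rule adj_bounded[OF Tmb])
  have ci: "cinner (adj Tm x) (adj Tm y) = cinner x y" for x y by (rule isometry_cinner[OF adjTmb iso])
  have Tadj: "Tm (adj Tm x) = x" for x
    by (rule cinner_ext) (simp add: adj_eq[OF Tmb] ci)
  have adjTi: "adj Tm x = Ti x" for x using TiTm[of "adj Tm x"] Tadj[of x] by simp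
  have Tci: "cinner (Tm x) (Tm y) = cinner x y" for x y by (simp add: adj_eq[OF Tmb] adjTi TiTm)
  have bijT: "bij Tm" by (rule o_bij[of Ti]) (auto simp: fun_eq_iff TmTi TiTm)
  have TU: "Tm \<in> unitary_group" unfolding unitary_group_def using Tmb bijT Tci by auto
  have fPar: "f \<in> parseval_frames M" using f sub by auto
  from T fPar have uniq: "\<exists>!h. h \<in> F0bar \<and> (\<exists>V\<in>unitary_group. h = V \<circ> f)"
    unfolding unitary_transversal_def by blast
  have "f \<in> F0bar \<and> (\<exists>V\<in>unitary_group. f = V \<circ> f)" using f id_unitary by (auto simp: comp_def)
  moreover have "g \<in> F0bar \<and> (\<exists>V\<in>unitary_group. g = V \<circ> f)" using g TU by (auto simp: comp_def fun_eq_iff gT)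
  ultimately have fg: "f = g" using uniq by blast
  define D where "D x = A x - B x" for x
  have Db: "bounded_op D" unfolding D_def[abs_def] by (rule bounded_op_diff_op[OF Ab Bb])
  have Df: "D (f x) = 0" for x using eq fg by (simp add: D_def fun_eq_iff)
  have adjD: "adj D \<phi> = 0" for \<phi>
  proof -
    have "ennreal ((norm (adj D \<phi>))\<^sup>2) = (\<integral>\<^sup>+ x. ennreal ((cmod (cinner \<phi> (D (f x))))\<^sup>2) \<partial>M)"
      by (rule parseval_adj(2)[OF fP Db, symmetric])
    also have "\<dots> = 0" by (simp add: Df)
    finally show ?thesis by simp
  qed
  have "D x = 0" for x by (rule cinner_eq_zeroI) (simp add: adj_eq[OF Db] adjD)
  then have "A = B" by (auto simp: fun_eq_iff D_def)
  then show ?thesis using fg by simp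
qed

lemma zeta_plus_inj:
  assumes A: "A \<in> GL_plus" and B: "B \<in> GL_plus"
    and f: "f \<in> parseval_frames M" and g: "g \<in> parseval_frames M" and eq: "A \<circ> f = B \<circ> g"
  shows "A = B \<and> f = g"
proof -
  have fP: "is_parseval_frame M f" and gP: "is_parseval_frame M g"
    using f g unfolding parseval_frames_def by auto
  obtain Ai where Ab: "bounded_op A" and Aib: "bounded_op Ai" and AAi: "\<And>x. A (Ai x) = x" and AiA: "\<And>x. Ai (A x) = x"
    using GLE[OF GL_plus_GL[OF A]] by blast
  obtain Bi where Bb: "bounded_op B" and Bib: "bounded_op Bi" and BBi: "\<And>x. B (Bi x) = x" and BiB: "\<And>x. Bi (B x) = x"
    using GLE[OF GL_plus_GL[OF B]] by blast
  have Asa: "sa A" and Apos: "\<And>x. 0 \<le> Re (cinner (A x) x)"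
    using A unfolding GL_plus_def positive_op_def sa_def by auto
  have Bsa: "sa B" and Bpos: "\<And>x. 0 \<le> Re (cinner (B x) x)"
    using B unfolding GL_plus_def positive_op_def sa_def by auto
  have adjA: "adj A x = A x" for x by (rule adj_unique[OF _ Ab]) (rule sa_D[OF Asa])
  have adjB: "adj B x = B x" for x by (rule adj_unique[OF _ Bb]) (rule sa_D[OF Bsa])
  have eqx: "A (f x) = B (g x)" for x using eq by (simp add: fun_eq_iff)
  have nAB: "(norm (A \<phi>))\<^sup>2 = (norm (B \<phi>))\<^sup>2" for \<phi>
  proof -
    have "ennreal ((norm (A \<phi>))\<^sup>2) = (\<integral>\<^sup>+ x. ennreal ((cmod (cinner \<phi> (A (f x))))\<^sup>2) \<partial>M)"
      using parseval_adj(2)[OF fP Ab, of \<phi>] by (simp add: adjA)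
    also have "\<dots> = (\<integral>\<^sup>+ x. ennreal ((cmod (cinner \<phi> (B (g x))))\<^sup>2) \<partial>M)" by (simp add: eqx)
    also have "\<dots> = ennreal ((norm (B \<phi>))\<^sup>2)"
      using parseval_adj(2)[OF gP Bb, of \<phi>] by (simp add: adjB)
    finally show ?thesis by simp
  qed
  define D where "D x = A (A x) - B (B x)" for x
  have Db: "bounded_op D" unfolding D_def[abs_def]
    by (rule bounded_op_diff_op[OF bounded_op_comp'[OF Ab Ab] bounded_op_comp'[OF Bb Bb]])
  have "cinner (D \<phi>) \<phi> = 0" for \<phi>
  proof -
    have "cinner (D \<phi>) \<phi> = cinner (A \<phi>) (A \<phi>) - cinner (B \<phi>) (B \<phi>)"
      by (simp add: D_def cinner_diff_left sa_D[OF Asa, of "A \<phi>"] sa_D[OF Bsa, of "B \<phi>"])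
    also have "\<dots> = 0" by (simp only: cinner_self_real nAB) simp
    finally show ?thesis .
  qed
  then have "D x = 0" for x by (rule quad_zero[OF Db])
  then have AB: "A (A x) = B (B x)" for x by (simp add: D_def)
  have AeqB: "A x = B x" for x
    by (rule sqrt_unique[OF Ab Asa Apos AiA Aib Bb Bsa Bpos BiB Bib AB])
  then have "A = B" by auto
  moreover have "f x = g x" for x using eqx[of x] AeqB[of "g x"] AiA by metis
  ultimately show ?thesis by auto
qed




theorem mainTheorem2:
  fixes M :: "'x::topological_space measure"
    and F0bar :: "('x \<Rightarrow> 'h::chilbert_space) set"
  assumes "separable_space TYPE('h)"
    and "locally_compact_space (euclidean :: 'x topology)"
    and "sets M = sets borel"
    and "unitary_transversal M F0bar"
  shows "continuous_OJ (GL \<times> F0bar) (\<lambda>(A, f). A \<circ> f)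
       \<and> bij_betw (\<lambda>(A, f). A \<circ> f) (GL \<times> F0bar) (frames M)
       \<and> continuous_OJ (GL_plus \<times> parseval_frames M) (\<lambda>(A, f). A \<circ> (f :: 'x \<Rightarrow> 'h))
       \<and> bij_betw (\<lambda>(A, f). A \<circ> (f :: 'x \<Rightarrow> 'h)) (GL_plus \<times> parseval_frames M) (frames M)"
proof -
  note T = assms(4)
  have sub: "F0bar \<subseteq> parseval_frames M" using T unfolding unitary_transversal_def by auto
  have PJ: "f \<in> parseval_frames M \<Longrightarrow> f \<in> J_space \<and> is_parseval_frame M f" for f :: "'x \<Rightarrow> 'h"
    unfolding parseval_frames_def by auto
  have GLb: "A \<in> GL \<Longrightarrow> bounded_op A" for A :: "'h \<Rightarrow> 'h" unfolding GL_def by auto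
  have c1: "continuous_OJ (GL \<times> F0bar) (\<lambda>(A, f). A \<circ> f)"
    by (rule continuity) (use sub PJ GLb in auto)
  have c2: "continuous_OJ (GL_plus \<times> parseval_frames M) (\<lambda>(A, f). A \<circ> (f :: 'x \<Rightarrow> 'h))"
    by (rule continuity) (use PJ GLb GL_plus_GL in auto)
  have b1: "bij_betw (\<lambda>(A, f). A \<circ> f) (GL \<times> F0bar) (frames M)"
    unfolding bij_betw_def
  proof
    show "inj_on (\<lambda>(A, f). A \<circ> f) (GL \<times> F0bar)"
    proof (rule inj_onI)
      fix p q assume p: "p \<in> GL \<times> F0bar" and q: "q \<in> GL \<times> F0bar"
        and e: "(\<lambda>(A, f). A \<circ> f) p = (\<lambda>(A, f). A \<circ> f) q"
      obtain A f where pp: "p = (A, f)" by (cases p)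
      obtain B g where qq: "q = (B, g)" by (cases q)
      have "A = B \<and> f = g" using zeta_inj[OF T, of A B f g] p q e pp qq by auto
      then show "p = q" using pp qq by simp
    qed
    show "(\<lambda>(A, f). A \<circ> f) ` (GL \<times> F0bar) = frames M"
    proof
      show "(\<lambda>(A, f). A \<circ> f) ` (GL \<times> F0bar) \<subseteq> frames M"
      proof
        fix y assume "y \<in> (\<lambda>(A, f). A \<circ> f) ` (GL \<times> F0bar)"
        then obtain A f where A: "A \<in> GL" and f: "f \<in> F0bar" and y: "y = A \<circ> f" by auto
        have "f \<in> J_space" "is_parseval_frame M f" using f sub PJ by auto
        then show "y \<in> frames M" using img_frame[OF A] y by blast
      qed
      show "frames M \<subseteq> (\<lambda>(A, f). A \<circ> f) ` (GL \<times> F0bar)"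
      proof
        fix g :: "'x \<Rightarrow> 'h" assume "g \<in> frames M"
        then obtain A h where "A \<in> GL" "h \<in> F0bar" "g = A \<circ> h" using zeta_surj[OF T] by blast
        then show "g \<in> (\<lambda>(A, f). A \<circ> f) ` (GL \<times> F0bar)" by force
      qed
    qed
  qed
  have b2: "bij_betw (\<lambda>(A, f). A \<circ> (f :: 'x \<Rightarrow> 'h)) (GL_plus \<times> parseval_frames M) (frames M)"
    unfolding bij_betw_def
  proof
    show "inj_on (\<lambda>(A, f). A \<circ> (f :: 'x \<Rightarrow> 'h)) (GL_plus \<times> parseval_frames M)"
    proof (rule inj_onI)
      fix p q assume p: "p \<in> GL_plus \<times> parseval_frames M" and q: "q \<in> GL_plus \<times> parseval_frames M"
        and e: "(\<lambda>(A, f). A \<circ> (f :: 'x \<Rightarrow> 'h)) p = (\<lambda>(A, f). A \<circ> f) q"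
      obtain A f where pp: "p = (A, f)" by (cases p)
      obtain B g where qq: "q = (B, g)" by (cases q)
      have "A = B \<and> f = g" using zeta_plus_inj[of A B f M g] p q e pp qq by auto
      then show "p = q" using pp qq by simp
    qed
    show "(\<lambda>(A, f). A \<circ> (f :: 'x \<Rightarrow> 'h)) ` (GL_plus \<times> parseval_frames M) = frames M"
    proof
      show "(\<lambda>(A, f). A \<circ> (f :: 'x \<Rightarrow> 'h)) ` (GL_plus \<times> parseval_frames M) \<subseteq> frames M"
      proof
        fix y assume "y \<in> (\<lambda>(A, f). A \<circ> (f :: 'x \<Rightarrow> 'h)) ` (GL_plus \<times> parseval_frames M)"
        then obtain A f where A: "A \<in> GL_plus" and f: "f \<in> parseval_frames M" and y: "y = A \<circ> f" by auto
        have "f \<in> J_space" "is_parseval_frame M f" using f PJ by auto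
        then show "y \<in> frames M" using img_frame[OF GL_plus_GL[OF A]] y by blast
      qed
      show "frames M \<subseteq> (\<lambda>(A, f). A \<circ> (f :: 'x \<Rightarrow> 'h)) ` (GL_plus \<times> parseval_frames M)"
      proof
        fix g :: "'x \<Rightarrow> 'h" assume "g \<in> frames M"
        then obtain A h where "A \<in> GL_plus" "h \<in> parseval_frames M" "g = A \<circ> h" using zeta_plus_surj by blast
        then show "g \<in> (\<lambda>(A, f). A \<circ> f) ` (GL_plus \<times> parseval_frames M)" by force
      qed
    qed
  qed
  show ?thesis using c1 b1 c2 b2 by blast
qed


end
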